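(* Let $j\geq1$ and $i\in\{0,1,\ldots,p-1\}$. Then there is an exact sequence of $E(2)_*$-comodules \[ 0\to\Sigma^{qpj}\underline{\ell}_j\otimes\underline{\ell}_i\to\underline{\ell}_{pj+i}\to Q^{pj-1}(A/\!/E(1))_*\to\bigoplus_{k=i+1}^{p-1}\Sigma^{\varphi(j,k)}\underline{\ell}_{j-1}\to0, \] where $\varphi(j,k)=q(p(j-1)+k)+|\overline{\tau}_2|=q(p(j-1)+k)+2p^2-1$. When $i=p-1$ the right-hand term is $0$, so that the sequence is a short exact sequence.
   Context: Let $p$ be an odd prime and $q=2(p-1)$. In the mod $p$ dual Steenrod algebra let $\zeta_n$ (degree $2(p^n-1)$) and $\overline{\tau}_n$ (degree $2p^n-1$) be the conjugates of Milnor's $\xi_n,\tau_n$. Let $(A/\!/E(1))_*=\mathbb{F}_p[\zeta_1,\zeta_2,\ldots]\otimes E(\overline{\tau}_2,\overline{\tau}_3,\ldots)$ and $(A/\!/E(2))_*=\mathbb{F}_p[\zeta_1,\ldots]\otimes E(\overline{\tau}_3,\ldots)$, comodule algebras over $E(2)_*=E(\overline{\tau}_0,\overline{\tau}_1,\overline{\tau}_2)$ (primitive generators) with coaction $\alpha(\zeta_k)=1\otimes\zeta_k$, $\alpha(\overline{\tau}_n)=1\otimes\overline{\tau}_n+\sum_{l=0}^{2}\overline{\tau}_l\otimes\zeta_{n-l}^{p^l}$ ($\zeta_0=1$). Weight: $\mathrm{wt}(\zeta_k)=\mathrm{wt}(\overline{\tau}_k)=p^k$, additive on products. $\underline{\ell}_j$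 denotes the $E(2)_*$-subcomodule of $(A/\!/E(1))_*$ spanned by monomials of weight $\le pj$ (so $\underline{\ell}_i=\mathbb{F}_p\{1,\zeta_1,\ldots,\zeta_1^i\}$ for $i<p$); tensor products carry the diagonal coaction. Every monomial of $(A/\!/E(1))_*$ is uniquely $m\overline{\tau}_2^\epsilon$ with $m$ a monomial in $(A/\!/E(2))_*$; $F^j(A/\!/E(1))_*$ is the span of those with $\mathrm{wt}(m)\ge pj$ (a filtration by $E(2)_*$-subcomodules), and $Q^{r}(A/\!/E(1))_*=(A/\!/E(1))_*/F^{r+1}(A/\!/E(1))_*$. *)

theory Defs
  imports Main "HOL-Computational_Algebra.Primes"
begin

text \<open>
A based graded comodule over 'k: a set of basis elements, a degree for each basis
element, and the coaction alpha(b) = sum_S tau_S (x) bco S b, where S ranges over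
subsets of {0,1,2}, tau_S is the product of the tau_l (l in S) in increasing order,
and bco S b is a finitely supported 'k-linear combination of basis elements.
\<close>

record ('b, 'k) bcomod =
  basis :: "'b set"
  bdeg  :: "'b \<Rightarrow> int"
  bco   :: "nat set \<Rightarrow> 'b \<Rightarrow> 'b \<Rightarrow> 'k"

definition vecs :: "('b, 'k::field) bcomod \<Rightarrow> ('b \<Rightarrow> 'k) set" where
  "vecs M = {v. (\<forall>b. v b \<noteq> 0 \<longrightarrow> b \<in> basis M) \<and> finite {b. v b \<noteq> 0}}"

definition homog :: "('b, 'k::field) bcomod \<Rightarrow> int \<Rightarrow> ('b \<Rightarrow> 'k) \<Rightarrow> bool" where
  "homog M d v \<longleftrightarrow> (\<forall>b. v b \<noteq> 0 \<longrightarrow> bdeg M b = d)"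

definition lin_co :: "('b, 'k::field) bcomod \<Rightarrow> nat set \<Rightarrow> ('b \<Rightarrow> 'k) \<Rightarrow> ('b \<Rightarrow> 'k)" where
  "lin_co M S v = (\<lambda>c. \<Sum>b\<in>{b. v b \<noteq> 0}. v b * bco M S b c)"

definition comod_map :: "('a, 'k::field) bcomod \<Rightarrow> ('b, 'k) bcomod
    \<Rightarrow> (('a \<Rightarrow> 'k) \<Rightarrow> ('b \<Rightarrow> 'k)) \<Rightarrow> bool" where
  "comod_map M N f \<longleftrightarrow>
     (\<forall>v\<in>vecs M. f v \<in> vecs N) \<and>
     (\<forall>v\<in>vecs M. \<forall>w\<in>vecs M. f (\<lambda>x. v x + w x) = (\<lambda>y. f v y + f w y)) \<and>
     (\<forall>v\<in>vecs M. \<forall>c. f (\<lambda>x. c * v x) = (\<lambda>y. c * f v y)) \<and>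
     (\<forall>v\<in>vecs M. \<forall>d. homog M d v \<longrightarrow> homog N d (f v)) \<and>
     (\<forall>S. S \<subseteq> {0,1,2} \<longrightarrow> (\<forall>v\<in>vecs M. f (lin_co M S v) = lin_co N S (f v)))"

definition exact4 ::
  "('a, 'k::field) bcomod \<Rightarrow> ('b, 'k) bcomod \<Rightarrow> ('c, 'k) bcomod \<Rightarrow> ('d, 'k) bcomod
   \<Rightarrow> (('a \<Rightarrow> 'k) \<Rightarrow> ('b \<Rightarrow> 'k)) \<Rightarrow> (('b \<Rightarrow> 'k) \<Rightarrow> ('c \<Rightarrow> 'k))
   \<Rightarrow> (('c \<Rightarrow> 'k) \<Rightarrow> ('d \<Rightarrow> 'k)) \<Rightarrow> bool" where
  "exact4 M1 M2 M3 M4 f g h \<longleftrightarrow>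
     comod_map M1 M2 f \<and> comod_map M2 M3 g \<and> comod_map M3 M4 h \<and>
     inj_on f (vecs M1) \<and>
     f ` vecs M1 = {w \<in> vecs M2. g w = (\<lambda>_. 0)} \<and>
     g ` vecs M2 = {w \<in> vecs M3. h w = (\<lambda>_. 0)} \<and>
     h ` vecs M3 = vecs M4"

definition susp :: "int \<Rightarrow> ('b, 'k) bcomod \<Rightarrow> ('b, 'k) bcomod" where
  "susp n M = M\<lparr>bdeg := (\<lambda>b. bdeg M b + n)\<rparr>"

text \<open>Degree of tau_S (|tau_l| = 2p^l - 1) and the sign tau_S1 tau_S2 = sign * tau_(S1 u S2).\<close>
definition taudeg :: "nat \<Rightarrow> nat set \<Rightarrow> int" where
  "taudeg p S = (\<Sum>l\<in>S. 2 * int p ^ l - 1)"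

definition osign :: "nat set \<Rightarrow> nat set \<Rightarrow> 'k::field" where
  "osign U V = (-1) ^ card {(u, v). u \<in> U \<and> v \<in> V \<and> v < u}"

text \<open>Tensor product with the diagonal coaction (Koszul sign convention):
  alpha(m (x) n) = sum (-1)^(|m_(0)| |n_(-1)|) m_(-1) n_(-1) (x) m_(0) (x) n_(0).\<close>
definition tensor :: "nat \<Rightarrow> ('a, 'k::field) bcomod \<Rightarrow> ('b, 'k) bcomod \<Rightarrow> ('a \<times> 'b, 'k) bcomod" where
  "tensor p M N =
     \<lparr> basis = basis M \<times> basis N,
       bdeg = (\<lambda>(a, b). bdeg M a + bdeg N b),
       bco = (\<lambda>S (a, b) (a', b').
          \<Sum>S1\<in>Pow S. osign S1 (S - S1)
             * (if even ((bdeg M a - taudeg p S1) * int (card (S - S1))) then 1 else -1)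
             * bco M S1 a a' * bco N (S - S1) b b') \<rparr>"

definition dsum_susp :: "nat set \<Rightarrow> (nat \<Rightarrow> int) \<Rightarrow> ('b, 'k::field) bcomod \<Rightarrow> (nat \<times> 'b, 'k) bcomod" where
  "dsum_susp K phi M =
     \<lparr> basis = K \<times> basis M,
       bdeg = (\<lambda>(k, b). phi k + bdeg M b),
       bco = (\<lambda>S (k, b) (k', c). if k = k' then bco M S b c else 0) \<rparr>"

text \<open>A monomial of (A//E(1))_* is (T, e): zeta_1^(e 1) zeta_2^(e 2) ... times
  taubar_(n_1) ... taubar_(n_r) with T = {n_1 < ... < n_r}, all n_i >= 2.\<close>
type_synonym amon = "nat set \<times> (nat \<Rightarrow> nat)"

definition A_basis :: "amon set" where
  "A_basis = {(T, e). finite T \<and> (\<forall>n\<in>T. 2 \<le> n) \<and> finite {k. e k \<noteq> 0} \<and> e 0 = 0}"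

definition A_deg :: "nat \<Rightarrow> amon \<Rightarrow> int" where
  "A_deg p m = (\<Sum>n\<in>fst m. 2 * int p ^ n - 1)
              + (\<Sum>k\<in>{k. snd m k \<noteq> 0}. int (snd m k) * 2 * (int p ^ k - 1))"

definition wt :: "nat \<Rightarrow> amon \<Rightarrow> nat" where
  "wt p m = (\<Sum>n\<in>fst m. p ^ n) + (\<Sum>k\<in>{k. snd m k \<noteq> 0}. snd m k * p ^ k)"

text \<open>Auxiliary graded-commutative algebra E(tau_0,tau_1,tau_2) (x) (A//E(1))_*,
  in which the coaction takes values. Monomials (U, e): U is the set of odd
  generators, coded tau_l |-> l (l <= 2) and taubar_n |-> n + 3, multiplied in
  increasing code order; e gives zeta exponents. Since all tau_l precede all
  taubar_n, a monomial with odd part S u (taubar codes of T) is tau_S (x) m.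
  Multiplication of monomials carries the Koszul sign of reordering odd generators;
  this is precisely the product (a (x) x)(b (x) y) = (-1)^(|x||b|) ab (x) xy.\<close>

type_synonym bmon = "nat set \<times> (nat \<Rightarrow> nat)"

definition bsingle :: "bmon \<Rightarrow> 'k::field \<Rightarrow> bmon \<Rightarrow> 'k" where
  "bsingle m c = (\<lambda>x. if x = m then c else 0)"

definition bmul :: "(bmon \<Rightarrow> 'k::field) \<Rightarrow> (bmon \<Rightarrow> 'k) \<Rightarrow> bmon \<Rightarrow> 'k" where
  "bmul f g = (\<lambda>m. \<Sum>(a, b)\<in>{(a, b). f a \<noteq> 0 \<and> g b \<noteq> 0 \<and> fst a \<inter> fst b = {}
                          \<and> (fst a \<union> fst b, \<lambda>k. snd a k + snd b k) = m}.
                   osign (fst a) (fst b) * f a * g b)"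

definition zexp :: "nat \<Rightarrow> nat \<Rightarrow> nat \<Rightarrow> nat" where
  "zexp k c = (if k = 0 then (\<lambda>_. 0) else (\<lambda>i. if i = k then c else 0))"

text \<open>alpha(taubar_n) = 1 (x) taubar_n + sum_(l=0..2) tau_l (x) zeta_(n-l)^(p^l), zeta_0 = 1.\<close>
definition alpha_tb :: "nat \<Rightarrow> nat \<Rightarrow> bmon \<Rightarrow> 'k::field" where
  "alpha_tb p n = (\<lambda>m. bsingle ({n + 3}, \<lambda>_. 0) 1 m
                       + (\<Sum>l\<in>{0,1,2::nat}. bsingle ({l}, zexp (n - l) (p ^ l)) 1 m))"

text \<open>alpha is multiplicative; alpha(zeta_k) = 1 (x) zeta_k.\<close>
definition alpha_A :: "nat \<Rightarrow> amon \<Rightarrow> bmon \<Rightarrow> 'k::field" where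
  "alpha_A p m = bmul (bsingle ({}, snd m) 1)
                      (foldr bmul (map (alpha_tb p) (sorted_list_of_set (fst m))) (bsingle ({}, \<lambda>_. 0) 1))"

definition A_co :: "nat \<Rightarrow> nat set \<Rightarrow> amon \<Rightarrow> amon \<Rightarrow> 'k::field" where
  "A_co p S m m' = alpha_A p m (S \<union> (\<lambda>n. n + 3) ` fst m', snd m')"

definition Acomod :: "nat \<Rightarrow> (amon, 'k::field) bcomod" where
  "Acomod p = \<lparr> basis = A_basis, bdeg = A_deg p, bco = A_co p \<rparr>"

definition ell :: "nat \<Rightarrow> nat \<Rightarrow> (amon, 'k::field) bcomod" where
  "ell p j = \<lparr> basis = {m \<in> A_basis. wt p m \<le> p * j}, bdeg = A_deg p, bco = A_co p \<rparr>"

text \<open>Q^r = (A//E(1))_* / F^(r+1), where F^(r+1) is spanned by the monomials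
  m taubar_2^eps with wt(m) >= p(r+1). The quotient is presented on the basis of
  the remaining monomials, with the projected coaction.\<close>
definition Qquot :: "nat \<Rightarrow> nat \<Rightarrow> (amon, 'k::field) bcomod" where
  "Qquot p r =
     \<lparr> basis = {m \<in> A_basis. wt p (fst m - {2}, snd m) < p * (r + 1)},
       bdeg = A_deg p,
       bco = (\<lambda>S m m'. if m' \<in> A_basis \<and> wt p (fst m' - {2}, snd m') < p * (r + 1)
                        then A_co p S m m' else 0) \<rparr>"

definition qq :: "nat \<Rightarrow> int" where
  "qq p = 2 * (int p - 1)"

definition phi :: "nat \<Rightarrow> nat \<Rightarrow> nat \<Rightarrow> int" where
  "phi p j k = qq p * (int p * (int j - 1) + int k) + 2 * int p ^ 2 - 1"

end

theory Submission
  imports Defs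
begin


definition esum :: "nat \<Rightarrow> (nat \<Rightarrow> nat) \<Rightarrow> nat" where
  "esum p e = (\<Sum>k\<in>{k. e k \<noteq> 0}. e k * p ^ k)"

definition wtb :: "nat \<Rightarrow> bmon \<Rightarrow> nat" where
  "wtb p u = (\<Sum>c\<in>{c\<in>fst u. 3 \<le> c}. p ^ (c - 3)) + esum p (snd u)"

definition wt2 :: "nat \<Rightarrow> bmon \<Rightarrow> nat" where
  "wt2 p u = (\<Sum>c\<in>{c\<in>fst u. 3 \<le> c \<and> c \<noteq> 5}. p ^ (c - 3)) + esum p (snd u)"

definition sh :: "nat \<Rightarrow> nat" where "sh c = (if c \<le> 2 then c else Suc c)"

definition Phi :: "nat \<Rightarrow> nat \<Rightarrow> nat \<Rightarrow> bmon \<Rightarrow> bmon" where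
  "Phi p N r u = (sh ` fst u, \<lambda>i. if i = 0 then 0 else if i = 1 then r + (N - wtb p u) else snd u (i - 1))"

definition Dset :: "nat \<Rightarrow> nat \<Rightarrow> bmon set" where
  "Dset p N = {u. finite (fst u) \<and> finite {k. snd u k \<noteq> 0} \<and> snd u 0 = 0 \<and> wtb p u \<le> N}"

definition rep :: "(bmon \<Rightarrow> bmon) \<Rightarrow> bmon set \<Rightarrow> (bmon \<Rightarrow> 'k::field) \<Rightarrow> (bmon \<Rightarrow> 'k) \<Rightarrow> bool" where
  "rep F D f g \<longleftrightarrow> (\<forall>x\<in>D. g (F x) = f x) \<and> (\<forall>y. g y \<noteq> 0 \<longrightarrow> (\<exists>x\<in>D. y = F x)) \<and> (\<forall>x. f x \<noteq> 0 \<longrightarrow> x \<in> D)"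

lemma esum_superset:
  assumes "finite A" "{k. e k \<noteq> 0} \<subseteq> A"
  shows "esum p e = (\<Sum>k\<in>A. e k * p ^ k)"
  unfolding esum_def by (rule sum.mono_neutral_left) (use assms in auto)

lemma esum_add:
  assumes "finite {k. e k \<noteq> 0}" "finite {k. e' k \<noteq> 0}"
  shows "esum p (\<lambda>k. e k + e' k) = esum p e + esum p e'"
proof -
  let ?A = "{k. e k \<noteq> 0} \<union> {k. e' k \<noteq> 0}"
  have "esum p (\<lambda>k. e k + e' k) = (\<Sum>k\<in>?A. (e k + e' k) * p ^ k)"
    by (rule esum_superset) (use assms in auto)
  also have "\<dots> = (\<Sum>k\<in>?A. e k * p ^ k) + (\<Sum>k\<in>?A. e' k * p ^ k)"
    by (simp add: sum.distrib algebra_simps)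
  also have "\<dots> = esum p e + esum p e'"
    using esum_superset[of ?A e p] esum_superset[of ?A e' p] assms by auto
  finally show ?thesis .
qed

lemma sum_codes_add:
  assumes "finite U" "finite V" "U \<inter> V = {}"
  shows "(\<Sum>c\<in>{c\<in>U \<union> V. P c}. g c) = (\<Sum>c\<in>{c\<in>U. P c}. g c) + (\<Sum>c\<in>{c\<in>V. P c}. g c)"
proof -
  have "{c\<in>U \<union> V. P c} = {c\<in>U. P c} \<union> {c\<in>V. P c}" by auto
  thus ?thesis using assms by (simp add: sum.union_disjoint disjoint_iff)
qed

lemma wtb_add:
  assumes "finite U" "finite V" "U \<inter> V = {}" "finite {k. e k \<noteq> 0}" "finite {k. e' k \<noteq> 0}"
  shows "wtb p (U \<union> V, \<lambda>k. e k + e' k) = wtb p (U, e) + wtb p (V, e')"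
  unfolding wtb_def fst_conv snd_conv esum_add[OF assms(4,5)] sum_codes_add[OF assms(1-3)] by simp

lemma wt2_add:
  assumes "finite U" "finite V" "U \<inter> V = {}" "finite {k. e k \<noteq> 0}" "finite {k. e' k \<noteq> 0}"
  shows "wt2 p (U \<union> V, \<lambda>k. e k + e' k) = wt2 p (U, e) + wt2 p (V, e')"
  unfolding wt2_def fst_conv snd_conv esum_add[OF assms(4,5)] sum_codes_add[OF assms(1-3)] by simp

lemma sh_inj: "inj sh"
  by (auto simp: inj_def sh_def split: if_splits)

lemma sh_less: "(sh a < sh b) = (a < b)"
  by (auto simp: sh_def)

lemma osign_sh: "osign (sh ` U) (sh ` V) = osign U V"
proof -
  have "{(u, v). u \<in> sh ` U \<and> v \<in> sh ` V \<and> v < u} = (\<lambda>(u,v). (sh u, sh v)) ` {(u, v). u \<in> U \<and> v \<in> V \<and> v < u}"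
    by (auto simp: sh_less image_iff)
  moreover have "inj_on (\<lambda>(u,v). (sh u, sh v)) X" for X
    using sh_inj by (auto simp: inj_on_def inj_def)
  ultimately show ?thesis unfolding osign_def by (simp add: card_image)
qed

lemma inj_on_Phi: "inj_on (Phi p N r) (Dset p N)"
proof
  fix x y assume x: "x \<in> Dset p N" and y: "y \<in> Dset p N" and eq: "Phi p N r x = Phi p N r y"
  from eq have "sh ` fst x = sh ` fst y" by (simp add: Phi_def)
  hence 1: "fst x = fst y" using sh_inj by (simp add: inj_image_eq_iff)
  have "snd x i = snd y i" for i
  proof (cases i)
    case 0 then show ?thesis using x y by (simp add: Dset_def)
  next
    case (Suc k)
    have "snd (Phi p N r x) (Suc (Suc k)) = snd (Phi p N r y) (Suc (Suc k))" using eq by simp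
    then show ?thesis using Suc by (simp add: Phi_def)
  qed
  then show "x = y" using 1 by (simp add: prod_eq_iff fun_eq_iff)
qed

lemma Phi_mult:
  assumes a: "a \<in> Dset p N1" and b: "b \<in> Dset p N2" and d: "fst a \<inter> fst b = {}"
  shows "(fst (Phi p N1 r1 a) \<union> fst (Phi p N2 r2 b), \<lambda>k. snd (Phi p N1 r1 a) k + snd (Phi p N2 r2 b) k)
          = Phi p (N1 + N2) (r1 + r2) (fst a \<union> fst b, \<lambda>k. snd a k + snd b k)"
    and "(fst a \<union> fst b, \<lambda>k. snd a k + snd b k) \<in> Dset p (N1 + N2)"
    and "wtb p (fst a \<union> fst b, \<lambda>k. snd a k + snd b k) = wtb p a + wtb p b"
proof -
  show w: "wtb p (fst a \<union> fst b, \<lambda>k. snd a k + snd b k) = wtb p a + wtb p b"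
    using wtb_add[of "fst a" "fst b" "snd a" "snd b" p] a b d by (simp add: Dset_def)
  show "(fst (Phi p N1 r1 a) \<union> fst (Phi p N2 r2 b), \<lambda>k. snd (Phi p N1 r1 a) k + snd (Phi p N2 r2 b) k)
          = Phi p (N1 + N2) (r1 + r2) (fst a \<union> fst b, \<lambda>k. snd a k + snd b k)"
    using a b unfolding Phi_def w by (auto simp: Dset_def image_Un fun_eq_iff)
  have "finite {k. snd a k + snd b k \<noteq> 0}"
    using a b by (auto simp: Dset_def intro: finite_subset[of _ "{k. snd a k \<noteq> 0} \<union> {k. snd b k \<noteq> 0}"])
  then show "(fst a \<union> fst b, \<lambda>k. snd a k + snd b k) \<in> Dset p (N1 + N2)"
    using a b w by (auto simp: Dset_def)
qed

lemma Phi_disj: "(fst (Phi p N1 r1 a) \<inter> fst (Phi p N2 r2 b) = {}) = (fst a \<inter> fst b = {})"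
  using sh_inj by (auto simp: Phi_def inj_def)

lemma Phi_osign: "osign (fst (Phi p N1 r1 a)) (fst (Phi p N2 r2 b)) = osign (fst a) (fst b)"
  by (simp add: Phi_def osign_sh)

lemma bmul_nz:
  assumes "bmul f g m \<noteq> 0"
  shows "\<exists>a b. f a \<noteq> 0 \<and> g b \<noteq> 0 \<and> fst a \<inter> fst b = {} \<and> (fst a \<union> fst b, \<lambda>k. snd a k + snd b k) = m"
proof -
  have "\<exists>x\<in>{(a, b). f a \<noteq> 0 \<and> g b \<noteq> 0 \<and> fst a \<inter> fst b = {}
                          \<and> (fst a \<union> fst b, \<lambda>k. snd a k + snd b k) = m}. (case x of (a, b) \<Rightarrow> osign (fst a) (fst b) * f a * g b) \<noteq> 0"
    using sum.not_neutral_contains_not_neutral[OF assms[unfolded bmul_def]] by blast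
  then show ?thesis by auto
qed

lemma rep_bmul:
  assumes rf: "rep (Phi p N1 r1) (Dset p N1) f F" and rg: "rep (Phi p N2 r2) (Dset p N2) g G"
  shows "rep (Phi p (N1 + N2) (r1 + r2)) (Dset p (N1 + N2)) (bmul f g) (bmul F G)"
  unfolding rep_def
proof (intro conjI ballI allI impI)
  fix x assume "bmul f g x \<noteq> 0"
  then obtain a b where ab: "f a \<noteq> 0" "g b \<noteq> 0" "fst a \<inter> fst b = {}"
     "(fst a \<union> fst b, \<lambda>k. snd a k + snd b k) = x" using bmul_nz by blast
  have "a \<in> Dset p N1" "b \<in> Dset p N2" using ab rf rg unfolding rep_def by blast+
  then show "x \<in> Dset p (N1 + N2)" using Phi_mult(2)[of a p N1 b N2] ab(3,4) by simp
next
  fix y assume "bmul F G y \<noteq> 0"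
  then obtain a' b' where ab: "F a' \<noteq> 0" "G b' \<noteq> 0" "fst a' \<inter> fst b' = {}"
     "(fst a' \<union> fst b', \<lambda>k. snd a' k + snd b' k) = y" using bmul_nz by blast
  obtain a where a: "a \<in> Dset p N1" "a' = Phi p N1 r1 a"
    using ab(1) rf unfolding rep_def by blast
  obtain b where b: "b \<in> Dset p N2" "b' = Phi p N2 r2 b"
    using ab(2) rg unfolding rep_def by blast
  have d: "fst a \<inter> fst b = {}" using ab(3) unfolding a(2) b(2) Phi_disj .
  have "y = Phi p (N1 + N2) (r1 + r2) (fst a \<union> fst b, \<lambda>k. snd a k + snd b k)"
    using Phi_mult(1)[OF a(1) b(1) d, of r1 r2] ab(4) unfolding a(2) b(2) by simp
  then show "\<exists>x\<in>Dset p (N1 + N2). y = Phi p (N1 + N2) (r1 + r2) x"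
    using Phi_mult(2)[OF a(1) b(1) d] by blast
next
  fix x assume x: "x \<in> Dset p (N1 + N2)"
  define X where "X = {(a, b). f a \<noteq> 0 \<and> g b \<noteq> 0 \<and> fst a \<inter> fst b = {}
                          \<and> (fst a \<union> fst b, \<lambda>k. snd a k + snd b k) = x}"
  define X' where "X' = {(a, b). F a \<noteq> 0 \<and> G b \<noteq> 0 \<and> fst a \<inter> fst b = {}
                          \<and> (fst a \<union> fst b, \<lambda>k. snd a k + snd b k) = Phi p (N1 + N2) (r1 + r2) x}"
  define h where "h = (\<lambda>(a, b). (Phi p N1 r1 a, Phi p N2 r2 b))"
  have XD: "a \<in> Dset p N1 \<and> b \<in> Dset p N2" if "(a, b) \<in> X" for a b
    using that rf rg unfolding X_def rep_def by blast
  have "X' = h ` X"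
  proof
    show "h ` X \<subseteq> X'"
    proof
      fix z assume "z \<in> h ` X"
      then obtain a b where ab: "(a, b) \<in> X" "z = h (a, b)" by auto
      have D: "a \<in> Dset p N1" "b \<in> Dset p N2" using XD ab by auto
      have "F (Phi p N1 r1 a) = f a" "G (Phi p N2 r2 b) = g b" using D rf rg unfolding rep_def by blast+
      then show "z \<in> X'" using ab Phi_mult(1)[OF D, of r1 r2] Phi_disj
        by (auto simp: X_def X'_def h_def)
    qed
  next
    show "X' \<subseteq> h ` X"
    proof
      fix z assume z: "z \<in> X'"
      then obtain a' b' where ab: "z = (a', b')" "F a' \<noteq> 0" "G b' \<noteq> 0" "fst a' \<inter> fst b' = {}"
        "(fst a' \<union> fst b', \<lambda>k. snd a' k + snd b' k) = Phi p (N1 + N2) (r1 + r2) x"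
        by (auto simp: X'_def)
      obtain a where a: "a \<in> Dset p N1" "a' = Phi p N1 r1 a"
        using ab(2) rf unfolding rep_def by blast
      obtain b where b: "b \<in> Dset p N2" "b' = Phi p N2 r2 b"
        using ab(3) rg unfolding rep_def by blast
      have d: "fst a \<inter> fst b = {}" using ab(4) unfolding a(2) b(2) Phi_disj .
      have "F (Phi p N1 r1 a) = f a" "G (Phi p N2 r2 b) = g b" using a(1) b(1) rf rg unfolding rep_def by blast+
      then have fa: "f a \<noteq> 0" "g b \<noteq> 0" using ab(2,3) unfolding a(2) b(2) by simp_all
      have "Phi p (N1 + N2) (r1 + r2) (fst a \<union> fst b, \<lambda>k. snd a k + snd b k) = Phi p (N1 + N2) (r1 + r2) x"
        using Phi_mult(1)[OF a(1) b(1) d, of r1 r2] ab(5) unfolding a(2) b(2) by simp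
      then have "(fst a \<union> fst b, \<lambda>k. snd a k + snd b k) = x"
        by (rule inj_onD[OF inj_on_Phi _ Phi_mult(2)[OF a(1) b(1) d] x])
      then show "z \<in> h ` X" using fa d ab(1) a b unfolding X_def h_def by (auto intro!: image_eqI[where x="(a,b)"])
    qed
  qed
  moreover have "inj_on h X"
  proof
    fix z1 z2 assume "z1 \<in> X" "z2 \<in> X" "h z1 = h z2"
    moreover obtain a1 b1 a2 b2 where z: "z1 = (a1, b1)" "z2 = (a2, b2)" by (cases z1, cases z2) auto
    ultimately have D: "a1 \<in> Dset p N1" "b1 \<in> Dset p N2" "a2 \<in> Dset p N1" "b2 \<in> Dset p N2"
      and e: "Phi p N1 r1 a1 = Phi p N1 r1 a2" "Phi p N2 r2 b1 = Phi p N2 r2 b2"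
      using XD by (auto simp: h_def)
    have "a1 = a2" by (rule inj_onD[OF inj_on_Phi e(1) D(1) D(3)])
    moreover have "b1 = b2" by (rule inj_onD[OF inj_on_Phi e(2) D(2) D(4)])
    ultimately show "z1 = z2" using z by simp
  qed
  ultimately have "bmul F G (Phi p (N1 + N2) (r1 + r2) x)
      = (\<Sum>z\<in>X. (case h z of (a, b) \<Rightarrow> osign (fst a) (fst b) * F a * G b))"
    unfolding bmul_def X'_def[symmetric] by (simp add: sum.reindex)
  also have "\<dots> = (\<Sum>z\<in>X. (case z of (a, b) \<Rightarrow> osign (fst a) (fst b) * f a * g b))"
  proof (rule sum.cong)
    fix z assume "z \<in> X"
    then obtain a b where z: "z = (a, b)" "(a, b) \<in> X" by (cases z) auto
    then have D: "a \<in> Dset p N1" "b \<in> Dset p N2" using XD by auto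
    have "F (Phi p N1 r1 a) = f a" "G (Phi p N2 r2 b) = g b" using D rf rg unfolding rep_def by blast+
    then show "(case h z of (a, b) \<Rightarrow> osign (fst a) (fst b) * F a * G b) = (case z of (a, b) \<Rightarrow> osign (fst a) (fst b) * f a * g b)"
      using z by (simp add: h_def Phi_osign)
  qed simp
  also have "\<dots> = bmul f g x" unfolding bmul_def X_def by simp
  finally show "bmul F G (Phi p (N1 + N2) (r1 + r2) x) = bmul f g x" .
qed

lemma rep_single:
  assumes "x \<in> D" "inj_on F D"
  shows "rep F D (bsingle x c) (bsingle (F x) c)"
  using assms unfolding rep_def bsingle_def by (auto dest: inj_onD)

lemma rep_add:
  assumes "rep F D f g" "rep F D f' g'"
  shows "rep F D (\<lambda>x. f x + f' x) (\<lambda>y. g y + g' y)"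
  using assms unfolding rep_def
  apply (intro conjI ballI allI impI)
    apply simp
   apply (metis add.right_neutral)
  apply (metis add.right_neutral)
  done

lemma esum_zero[simp]: "esum p (\<lambda>_. 0) = 0"
  by (simp add: esum_def)

lemma esum_zexp:
  assumes "0 < p"
  shows "esum p (zexp k c) = (if k = 0 then 0 else c * p ^ k)"
proof -
  have "esum p (zexp k c) = (\<Sum>i\<in>{k}. zexp k c i * p ^ i)"
    by (rule esum_superset) (auto simp: zexp_def split: if_splits)
  then show ?thesis by (simp add: zexp_def)
qed

lemma wtb_tbsingle: "wtb p ({n + 3}, \<lambda>_. 0) = p ^ n"
proof -
  have "{c\<in>{n + 3}. 3 \<le> c} = {n + 3}" by auto
  then show ?thesis by (simp add: wtb_def)
qed

lemma wtb_lsingle: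
  assumes "0 < p" "l \<le> 2"
  shows "wtb p ({l}, zexp k c) = (if k = 0 then 0 else c * p ^ k)"
  using assms by (simp add: wtb_def esum_zexp)

lemma zexp_0[simp]: "zexp k c 0 = 0"
  by (simp add: zexp_def)

lemma finite_zexp[simp]: "finite {i. zexp k c i \<noteq> 0}"
  by (rule finite_subset[of _ "{k}"]) (auto simp: zexp_def split: if_splits)

lemma finite_zexp'[simp]: "finite {i. 0 < zexp k c i}"
  by (rule finite_subset[of _ "{k}"]) (auto simp: zexp_def split: if_splits)

lemma Phi_tb:
  assumes "2 \<le> n"
  shows "Phi p (p ^ n) 0 ({n + 3}, \<lambda>_. 0) = ({Suc n + 3}, \<lambda>_. 0)"
  using assms by (auto simp: Phi_def wtb_tbsingle sh_def fun_eq_iff)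

lemma Phi_l:
  assumes "0 < p" "2 \<le> n" "l \<le> 2"
  shows "Phi p (p ^ n) 0 ({l}, zexp (n - l) (p ^ l)) = ({l}, zexp (Suc n - l) (p ^ l))"
proof -
  have w: "wtb p ({l}, zexp (n - l) (p ^ l)) = (if n = l then 0 else p ^ n)"
    using assms by (simp add: wtb_lsingle power_add[symmetric])
  show ?thesis
    using assms unfolding Phi_def w by (auto simp: sh_def fun_eq_iff zexp_def)
qed

lemma Dset_tb: "({n + 3}, \<lambda>_. 0) \<in> Dset p (p ^ n)"
  by (simp add: Dset_def wtb_tbsingle)

lemma Dset_l:
  assumes "0 < p" "l \<le> n" "l \<le> 2"
  shows "({l}, zexp (n - l) (p ^ l)) \<in> Dset p (p ^ n)"
  using assms by (simp add: Dset_def wtb_lsingle power_add[symmetric])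

lemma alpha_tb_expand:
  "alpha_tb p n = (\<lambda>m. bsingle ({n + 3}, \<lambda>_. 0) 1 m + (bsingle ({0}, zexp (n - 0) (p ^ 0)) 1 m
     + (bsingle ({1}, zexp (n - 1) (p ^ 1)) 1 m + bsingle ({2}, zexp (n - 2) (p ^ 2)) 1 m)))"
  by (simp add: alpha_tb_def)

lemma rep_tb:
  assumes "0 < p" "2 \<le> n"
  shows "rep (Phi p (p ^ n) 0) (Dset p (p ^ n)) (alpha_tb p n) (alpha_tb p (Suc n))"
proof -
  let ?F = "Phi p (p ^ n) 0" and ?D = "Dset p (p ^ n)"
  have i: "inj_on ?F ?D" by (rule inj_on_Phi)
  have r0: "rep ?F ?D (bsingle ({n + 3}, \<lambda>_. 0) 1) (bsingle ({Suc n + 3}, \<lambda>_. 0) 1)"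
    using rep_single[OF Dset_tb i] Phi_tb[OF assms(2)] by metis
  have rl: "rep ?F ?D (bsingle ({l}, zexp (n - l) (p ^ l)) 1) (bsingle ({l}, zexp (Suc n - l) (p ^ l)) 1)"
    if "l \<le> 2" for l
    using rep_single[OF Dset_l[OF assms(1) _ that] i] Phi_l[OF assms that] that assms(2) by simp
  show ?thesis
    unfolding alpha_tb_expand[of p n] alpha_tb_expand[of p "Suc n"]
    by (intro rep_add r0 rl) auto
qed

lemma Phi_empty0: "Phi p 0 0 ({}, \<lambda>_. 0) = ({}, \<lambda>_. 0)"
  by (simp add: Phi_def wtb_def fun_eq_iff)

lemma rep_foldr:
  assumes "0 < p" "\<forall>n\<in>set L. 2 \<le> n"
  shows "rep (Phi p (\<Sum>n\<leftarrow>L. p ^ n) 0) (Dset p (\<Sum>n\<leftarrow>L. p ^ n))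
           (foldr bmul (map (alpha_tb p) L) (bsingle ({}, \<lambda>_. 0) (1::'k::field)))
           (foldr bmul (map (alpha_tb p) (map Suc L)) (bsingle ({}, \<lambda>_. 0) (1::'k::field)))"
  using assms(2)
proof (induction L)
  case Nil
  have "({}, \<lambda>_. 0) \<in> Dset p 0" by (simp add: Dset_def wtb_def)
  from rep_single[OF this inj_on_Phi[of p 0 0], of 1] show ?case by (simp add: Phi_empty0)
next
  case (Cons n L)
  have "rep (Phi p (p ^ n + (\<Sum>n\<leftarrow>L. p ^ n)) (0 + 0)) (Dset p (p ^ n + (\<Sum>n\<leftarrow>L. p ^ n)))
     (bmul (alpha_tb p n) (foldr bmul (map (alpha_tb p) L) (bsingle ({}, \<lambda>_. 0) (1::'k::field))))
     (bmul (alpha_tb p (Suc n)) (foldr bmul (map (alpha_tb p) (map Suc L)) (bsingle ({}, \<lambda>_. 0) (1::'k::field))))"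
  proof (rule rep_bmul)
    show "rep (Phi p (p ^ n) 0) (Dset p (p ^ n)) (alpha_tb p n) (alpha_tb p (Suc n))"
      using Cons.prems by (intro rep_tb assms(1)) auto
    show "rep (Phi p (\<Sum>n\<leftarrow>L. p ^ n) 0) (Dset p (\<Sum>n\<leftarrow>L. p ^ n))
           (foldr bmul (map (alpha_tb p) L) (bsingle ({}, \<lambda>_. 0) (1::'k::field)))
           (foldr bmul (map (alpha_tb p) (map Suc L)) (bsingle ({}, \<lambda>_. 0) (1::'k::field)))"
      using Cons.IH Cons.prems by simp
  qed
  then show ?case by simp
qed



lemma sl_Suc:
  assumes "finite T"
  shows "sorted_list_of_set (Suc ` T) = map Suc (sorted_list_of_set T)"
proof -
  let ?L = "sorted_list_of_set T"
  have "sorted_wrt (<) (map Suc ?L)"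
    using sorted_list_of_set.strict_sorted_key_list_of_set[of T] by (simp add: sorted_wrt_map)
  moreover have "set (map Suc ?L) = Suc ` T" using assms by simp
  moreover have "length (map Suc ?L) = card (Suc ` T)" using assms by (simp add: card_image)
  ultimately show ?thesis
    using sorted_list_of_set_unique[of "Suc ` T" "map Suc ?L"] assms by simp
qed

lemma sl_insert2:
  assumes "finite (T::nat set)" "\<forall>n\<in>T. 2 < n"
  shows "sorted_list_of_set (insert 2 T) = 2 # sorted_list_of_set T"
proof -
  have m: "Min (insert 2 T) = (2::nat)" using assms by (auto intro!: Min_eqI)
  have "insert 2 T - {2} = T" using assms by auto
  then show ?thesis using sorted_list_of_set_nonempty[of "insert 2 T"] assms m by simp
qed

definition Wm :: "nat \<Rightarrow> nat \<Rightarrow> nat \<Rightarrow> amon \<Rightarrow> amon" where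
  "Wm p N r x = (Suc ` fst x, \<lambda>i. if i = 0 then 0 else if i = 1 then r + (N - wt p x) else snd x (i - 1))"

lemma wt_esum: "wt p x = (\<Sum>n\<in>fst x. p ^ n) + esum p (snd x)"
  by (simp add: wt_def esum_def)

lemma A_basisD:
  assumes "x \<in> A_basis"
  shows "finite (fst x)" "\<forall>n\<in>fst x. 2 \<le> n" "finite {k. snd x k \<noteq> 0}" "snd x 0 = 0"
  using assms by (auto simp: A_basis_def)

lemma rep_alpha:
  assumes p: "0 < p" and x: "x \<in> A_basis" and w: "wt p x \<le> N"
  shows "rep (Phi p N r) (Dset p N) (alpha_A p x :: bmon \<Rightarrow> 'k::field) (alpha_A p (Wm p N r x))"
proof -
  obtain T e where xe: "x = (T, e)" by (cases x)
  have fT: "finite T" and T2: "\<forall>n\<in>T. 2 \<le> n" and fe: "finite {k. e k \<noteq> 0}" and e0: "e 0 = 0"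
    using A_basisD[OF x] xe by auto
  let ?L = "sorted_list_of_set T"
  let ?s = "\<Sum>n\<in>T. p ^ n"
  have sumL: "(\<Sum>n\<leftarrow>?L. p ^ n) = ?s"
    using fT by (simp add: sum_list_distinct_conv_sum_set)
  have R: "rep (Phi p ?s 0) (Dset p ?s)
           (foldr bmul (map (alpha_tb p) ?L) (bsingle ({}, \<lambda>_. 0) (1::'k)))
           (foldr bmul (map (alpha_tb p) (map Suc ?L)) (bsingle ({}, \<lambda>_. 0) 1))"
    using rep_foldr[OF p, of ?L] T2 fT sumL by simp
  define N' where "N' = N - ?s"
  have wx: "wt p x = ?s + esum p e" using wt_esum[of p x] xe by simp
  have wb: "wtb p ({}, e) = esum p e" by (simp add: wtb_def)
  have D: "({}, e) \<in> Dset p N'" using fe e0 w wx wb by (simp add: Dset_def N'_def)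
  have P: "Phi p N' r ({}, e) = ({}, snd (Wm p N r x))"
    using wx wb e0 by (auto simp: Phi_def Wm_def N'_def fun_eq_iff xe)
  have S: "rep (Phi p N' r) (Dset p N') (bsingle ({}, e) (1::'k)) (bsingle ({}, snd (Wm p N r x)) 1)"
    using rep_single[OF D inj_on_Phi] P by metis
  have B: "rep (Phi p (N' + ?s) (r + 0)) (Dset p (N' + ?s))
      (bmul (bsingle ({}, e) (1::'k)) (foldr bmul (map (alpha_tb p) ?L) (bsingle ({}, \<lambda>_. 0) 1)))
      (bmul (bsingle ({}, snd (Wm p N r x)) 1) (foldr bmul (map (alpha_tb p) (map Suc ?L)) (bsingle ({}, \<lambda>_. 0) 1)))"
    by (rule rep_bmul[OF S R])
  have NN: "N' + ?s = N" using w wx by (simp add: N'_def)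
  have fW: "fst (Wm p N r x) = Suc ` T" by (simp add: Wm_def xe)
  show ?thesis
    using B unfolding NN alpha_A_def fW sl_Suc[OF fT] by (simp add: xe)
qed

lemma alpha_tb_nz:
  assumes "alpha_tb p n a \<noteq> (0::'k::field)"
  shows "a = ({n + 3}, \<lambda>_. 0) \<or> (\<exists>l\<le>2. a = ({l}, zexp (n - l) (p ^ l)))"
proof (rule ccontr)
  assume "\<not> ?thesis"
  then have "a \<noteq> ({n + 3}, \<lambda>_. 0)" "a \<noteq> ({0}, zexp (n - 0) (p ^ 0))"
     "a \<noteq> ({1}, zexp (n - 1) (p ^ 1))" "a \<noteq> ({2}, zexp (n - 2) (p ^ 2))"
    by (metis le0, metis le0, metis one_le_numeral, metis order_refl)
  then have "alpha_tb p n a = (0::'k)" unfolding alpha_tb_expand bsingle_def by simp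
  then show False using assms by simp
qed

lemma wt2_le_wtb: "wt2 p u \<le> wtb p u" if "finite (fst u)"
proof -
  have "(\<Sum>c\<in>{c\<in>fst u. 3 \<le> c \<and> c \<noteq> 5}. p ^ (c - 3)) \<le> (\<Sum>c\<in>{c\<in>fst u. 3 \<le> c}. p ^ (c - 3))"
    by (rule sum_mono2) (use that in auto)
  then show ?thesis by (simp add: wt2_def wtb_def)
qed

lemma wt2_eq_wtb: "wt2 p u = wtb p u" if "5 \<notin> fst u"
proof -
  have "{c\<in>fst u. 3 \<le> c \<and> c \<noteq> 5} = {c\<in>fst u. 3 \<le> c}" using that by auto
  then show ?thesis by (simp add: wt2_def wtb_def)
qed

lemma tb_term_props:
  assumes p: "0 < p" and n: "2 \<le> n" and nz: "alpha_tb p n a \<noteq> (0::'k::field)"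
  shows "\<exists>c. fst a = {c} \<and> c \<in> {0, 1, 2, n + 3}" "finite {k. snd a k \<noteq> 0}" "snd a 0 = 0"
    "wtb p a \<le> p ^ n" "(if n = 2 then 0 else p ^ n) \<le> wt2 p a"
proof -
  consider "a = ({n + 3}, \<lambda>_. 0)" | l where "l \<le> 2" "a = ({l}, zexp (n - l) (p ^ l))"
    using alpha_tb_nz[OF nz] by blast
  then have "(\<exists>c. fst a = {c} \<and> c \<in> {0, 1, 2, n + 3}) \<and> finite {k. snd a k \<noteq> 0} \<and> snd a 0 = 0 \<and>
    wtb p a \<le> p ^ n \<and> (if n = 2 then 0 else p ^ n) \<le> wt2 p a"
  proof cases
    case 1
    have "wt2 p a = (if n = 2 then 0 else p ^ n)"
    proof -
      have "{c\<in>{n + 3}. 3 \<le> c \<and> c \<noteq> 5} = (if n = 2 then {} else {n + 3})" by auto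
      then show ?thesis using 1 by (simp add: wt2_def)
    qed
    then show ?thesis using 1 wtb_tbsingle[of p n] by simp
  next
    case (2 l)
    have w: "wtb p a = (if n = l then 0 else p ^ n)"
      using 2 p n by (simp add: wtb_lsingle power_add[symmetric])
    have "wt2 p a = wtb p a" using 2 by (intro wt2_eq_wtb) auto
    then show ?thesis using 2 w n by auto
  qed
  then show "\<exists>c. fst a = {c} \<and> c \<in> {0, 1, 2, n + 3}" "finite {k. snd a k \<noteq> 0}" "snd a 0 = 0"
    "wtb p a \<le> p ^ n" "(if n = 2 then 0 else p ^ n) \<le> wt2 p a" by blast+
qed

lemma finite_sum_supp:
  assumes "finite {k. e k \<noteq> 0}" "finite {k. e' k \<noteq> 0}"
  shows "finite {k. e k + e' k \<noteq> (0::nat)}"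
  by (rule finite_subset[of _ "{k. e k \<noteq> 0} \<union> {k. e' k \<noteq> 0}"]) (use assms in auto)

lemma supp_foldr:
  assumes p: "0 < p" and L: "\<forall>n\<in>set L. 2 \<le> n"
    and nz: "foldr bmul (map (alpha_tb p) L) (bsingle ({}, \<lambda>_. 0) (1::'k::field)) u \<noteq> 0"
  shows "fst u \<subseteq> {0,1,2} \<union> (\<lambda>n. n + 3) ` set L \<and> card (fst u) = length L \<and> finite (fst u)
    \<and> finite {k. snd u k \<noteq> 0} \<and> snd u 0 = 0 \<and> wtb p u \<le> (\<Sum>n\<leftarrow>L. p ^ n)
    \<and> (\<Sum>n\<leftarrow>L. if n = 2 then 0 else p ^ n) \<le> wt2 p u"
  using L nz
proof (induction L arbitrary: u)
  case Nil
  then have "u = ({}, \<lambda>_. 0)" by (auto simp: bsingle_def split: if_splits)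
  then show ?case by (simp add: wtb_def wt2_def)
next
  case (Cons n L)
  have "bmul (alpha_tb p n) (foldr bmul (map (alpha_tb p) L) (bsingle ({}, \<lambda>_. 0) (1::'k))) u \<noteq> 0"
    using Cons.prems(2) by simp
  from bmul_nz[OF this] obtain a b where ab: "alpha_tb p n a \<noteq> (0::'k)"
    "foldr bmul (map (alpha_tb p) L) (bsingle ({}, \<lambda>_. 0) (1::'k)) b \<noteq> 0"
    "fst a \<inter> fst b = {}" "(fst a \<union> fst b, \<lambda>k. snd a k + snd b k) = u"
    by blast
  have n: "2 \<le> n" using Cons.prems by simp
  have IH: "fst b \<subseteq> {0,1,2} \<union> (\<lambda>n. n + 3) ` set L \<and> card (fst b) = length L \<and> finite (fst b)
    \<and> finite {k. snd b k \<noteq> 0} \<and> snd b 0 = 0 \<and> wtb p b \<le> (\<Sum>n\<leftarrow>L. p ^ n)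
    \<and> (\<Sum>n\<leftarrow>L. if n = 2 then 0 else p ^ n) \<le> wt2 p b"
    using Cons.IH[OF _ ab(2)] Cons.prems(1) by simp
  then have IH': "fst b \<subseteq> {0,1,2} \<union> (\<lambda>n. n + 3) ` set L" "card (fst b) = length L" "finite (fst b)"
    "finite {k. snd b k \<noteq> 0}" "snd b 0 = 0" "wtb p b \<le> (\<Sum>n\<leftarrow>L. p ^ n)"
    "(\<Sum>n\<leftarrow>L. if n = 2 then 0 else p ^ n) \<le> wt2 p b"
    by blast+
  obtain c where c: "fst a = {c}" "c \<in> {0, 1, 2, n + 3}" using tb_term_props(1)[OF p n ab(1)] by blast
  note A = tb_term_props(2-5)[OF p n ab(1)]
  have fa: "finite (fst a)" using c by simp
  have cb: "c \<notin> fst b" using ab(3) c by auto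
  have wtb: "wtb p u = wtb p a + wtb p b"
    unfolding ab(4)[symmetric] using wtb_add[OF fa IH'(3) ab(3) A(1) IH'(4), of p] by (simp only: prod.collapse)
  have wt2: "wt2 p u = wt2 p a + wt2 p b"
    unfolding ab(4)[symmetric] using wt2_add[OF fa IH'(3) ab(3) A(1) IH'(4), of p] by (simp only: prod.collapse)
  have fu: "fst u = insert c (fst b)" unfolding ab(4)[symmetric] c(1) by simp
  have su: "snd u = (\<lambda>k. snd a k + snd b k)" unfolding ab(4)[symmetric] by simp
  have g1: "fst u \<subseteq> {0,1,2} \<union> (\<lambda>n. n + 3) ` set (n # L)" using fu c(2) IH'(1) by auto
  have g2: "card (fst u) = length (n # L)" using fu card_insert_disjoint[OF IH'(3) cb] IH'(2) by simp
  have g3: "finite (fst u)" using fu IH'(3) by simp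
  have g4: "finite {k. snd u k \<noteq> 0}" using su finite_sum_supp[OF A(1) IH'(4)] by simp
  have g5: "snd u 0 = 0" using su A(2) IH'(5) by simp
  have g6: "wtb p u \<le> (\<Sum>n\<leftarrow>n # L. p ^ n)" using wtb A(3) IH'(6) by simp
  have g7: "(\<Sum>n\<leftarrow>n # L. if n = 2 then 0 else p ^ n) \<le> wt2 p u"
    using wt2 A(4) IH'(7) by simp
  show ?case using g1 g2 g3 g4 g5 g6 g7 by blast
qed

lemma sum_skip2:
  assumes "finite T"
  shows "(\<Sum>n\<in>T. if n = 2 then 0 else p ^ n) = (\<Sum>n\<in>T - {2}. (p::nat) ^ n)"
proof -
  have "(\<Sum>n\<in>T. if n = 2 then 0 else p ^ n) = (\<Sum>n\<in>T - {2}. if n = 2 then 0 else p ^ n)"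
    by (rule sum.mono_neutral_right) (use assms in auto)
  also have "\<dots> = (\<Sum>n\<in>T - {2}. p ^ n)" by (rule sum.cong) auto
  finally show ?thesis .
qed

lemma supp_alpha:
  assumes p: "0 < p" and x: "x \<in> A_basis" and nz: "alpha_A p x u \<noteq> (0::'k::field)"
  shows "fst u \<subseteq> {0,1,2} \<union> (\<lambda>n. n + 3) ` fst x" "card (fst u) = card (fst x)" "finite (fst u)"
    "finite {k. snd u k \<noteq> 0}" "snd u 0 = 0" "wtb p u \<le> wt p x" "wt p (fst x - {2}, snd x) \<le> wt2 p u"
proof -
  obtain T e where xe: "x = (T, e)" by (cases x)
  have fT: "finite T" and T2: "\<forall>n\<in>T. 2 \<le> n" and fe: "finite {k. e k \<noteq> 0}" and e0: "e 0 = 0"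
    using A_basisD[OF x] xe by auto
  let ?L = "sorted_list_of_set T"
  from nz obtain a b where ab: "bsingle ({}, e) (1::'k) a \<noteq> 0"
    "foldr bmul (map (alpha_tb p) ?L) (bsingle ({}, \<lambda>_. 0) (1::'k)) b \<noteq> 0"
    "fst a \<inter> fst b = {}" "(fst a \<union> fst b, \<lambda>k. snd a k + snd b k) = u"
    unfolding alpha_A_def xe using bmul_nz by fastforce
  have a: "a = ({}, e)" using ab(1) by (simp add: bsingle_def split: if_splits)
  have F: "fst b \<subseteq> {0,1,2} \<union> (\<lambda>n. n + 3) ` T" "card (fst b) = card T" "finite (fst b)"
    "finite {k. snd b k \<noteq> 0}" "snd b 0 = 0" "wtb p b \<le> (\<Sum>n\<in>T. p ^ n)"
    "(\<Sum>n\<in>T - {2}. p ^ n) \<le> wt2 p b"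
    using supp_foldr[OF p _ ab(2)] T2 fT
    by (auto simp: sum_list_distinct_conv_sum_set sum_skip2[OF fT])
  have u: "u = (fst b, \<lambda>k. e k + snd b k)" using ab(4) a by simp
  have wtb: "wtb p u = esum p e + wtb p b"
    using wtb_add[of "{}" "fst b" e "snd b" p] F fe u by (simp add: wtb_def)
  have wt2: "wt2 p u = esum p e + wt2 p b"
    using wt2_add[of "{}" "fst b" e "snd b" p] F fe u by (simp add: wt2_def)
  show "fst u \<subseteq> {0,1,2} \<union> (\<lambda>n. n + 3) ` fst x" "card (fst u) = card (fst x)" "finite (fst u)"
    "snd u 0 = 0" using F u xe e0 by auto
  show "finite {k. snd u k \<noteq> 0}" using finite_sum_supp[OF fe F(4)] u by simp
  show "wtb p u \<le> wt p x" using wtb F wt_esum[of p x] xe by simp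
  show "wt p (fst x - {2}, snd x) \<le> wt2 p u" using wt2 F wt_esum[of p "(T - {2}, e)"] xe by simp
qed



definition Wc :: "amon \<Rightarrow> nat \<Rightarrow> amon" where
  "Wc y c = (Suc ` fst y, \<lambda>i. if i = 0 then 0 else if i = 1 then c else snd y (i - 1))"

lemma Wm_Wc: "Wm p N r y = Wc y (r + (N - wt p y))"
  by (simp add: Wm_def Wc_def)

lemma supp_superset:
  assumes "finite A" "{k. e k \<noteq> 0} \<subseteq> A" "\<And>k. F 0 k = 0"
  shows "(\<Sum>k\<in>{k. e k \<noteq> (0::nat)}. F (e k) k) = (\<Sum>k\<in>A. F (e k) k)"
  by (rule sum.mono_neutral_left) (use assms in auto)

lemma Wc_supp:
  assumes "y \<in> A_basis"
  shows "{k. snd (Wc y c) k \<noteq> 0} \<subseteq> insert 1 (Suc ` {k. snd y k \<noteq> 0})"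
    "finite (insert 1 (Suc ` {k. snd y k \<noteq> 0}))"
    "1 \<notin> Suc ` {k. snd y k \<noteq> 0}"
proof -
  have e0: "snd y 0 = 0" and fe: "finite {k. snd y k \<noteq> 0}" using A_basisD[OF assms] by auto
  show "{k. snd (Wc y c) k \<noteq> 0} \<subseteq> insert 1 (Suc ` {k. snd y k \<noteq> 0})"
  proof
    fix k assume "k \<in> {k. snd (Wc y c) k \<noteq> 0}"
    then have k: "snd (Wc y c) k \<noteq> 0" by simp
    show "k \<in> insert 1 (Suc ` {k. snd y k \<noteq> 0})"
    proof (cases "k \<le> 1")
      case True then show ?thesis using k by (cases k) (auto simp: Wc_def)
    next
      case False
      then have "snd y (k - 1) \<noteq> 0" "k = Suc (k - 1)" using k by (auto simp: Wc_def)
      then show ?thesis by blast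
    qed
  qed
  show "finite (insert 1 (Suc ` {k. snd y k \<noteq> 0}))" using fe by simp
  show "1 \<notin> Suc ` {k. snd y k \<noteq> 0}" using e0 by auto
qed

lemma Wc_sum:
  assumes y: "y \<in> A_basis" and F0: "\<And>k. F 0 k = 0"
  shows "(\<Sum>k\<in>{k. snd (Wc y c) k \<noteq> 0}. F (snd (Wc y c) k) k)
       = F c 1 + (\<Sum>k\<in>{k. snd y k \<noteq> 0}. F (snd y k) (Suc k))"
proof -
  let ?E = "{k. snd y k \<noteq> 0}"
  have "(\<Sum>k\<in>{k. snd (Wc y c) k \<noteq> 0}. F (snd (Wc y c) k) k) = (\<Sum>k\<in>insert 1 (Suc ` ?E). F (snd (Wc y c) k) k)"
    using Wc_supp[OF y] by (intro supp_superset) (auto simp: F0)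
  also have "\<dots> = F (snd (Wc y c) 1) 1 + (\<Sum>k\<in>Suc ` ?E. F (snd (Wc y c) k) k)"
    using Wc_supp[OF y] by (simp add: sum.insert_remove)
  also have "(\<Sum>k\<in>Suc ` ?E. F (snd (Wc y c) k) k) = (\<Sum>k\<in>?E. F (snd (Wc y c) (Suc k)) (Suc k))"
    by (simp add: sum.reindex)
  also have "\<dots> = (\<Sum>k\<in>?E. F (snd y k) (Suc k))"
  proof (rule sum.cong)
    fix k assume "k \<in> ?E"
    then have "k \<noteq> 0" using A_basisD(4)[OF y] by (intro notI) simp
    then show "F (snd (Wc y c) (Suc k)) (Suc k) = F (snd y k) (Suc k)" by (simp add: Wc_def)
  qed simp
  finally show ?thesis by (simp add: Wc_def)
qed

lemma wt_Wc:
  assumes y: "y \<in> A_basis"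
  shows "wt p (Wc y c) = p * c + p * wt p y"
proof -
  have fT: "finite (fst y)" using A_basisD[OF y] by auto
  have 1: "(\<Sum>n\<in>fst (Wc y c). p ^ n) = p * (\<Sum>n\<in>fst y. p ^ n)"
    by (simp add: Wc_def sum.reindex sum_distrib_left)
  have 2: "esum p (snd (Wc y c)) = c * p + (\<Sum>k\<in>{k. snd y k \<noteq> 0}. snd y k * p ^ Suc k)"
    unfolding esum_def using Wc_sum[OF y, of "\<lambda>a k. a * p ^ k" c] by simp
  have 3: "(\<Sum>k\<in>{k. snd y k \<noteq> 0}. snd y k * p ^ Suc k) = p * esum p (snd y)"
    by (simp add: esum_def sum_distrib_left algebra_simps)
  show ?thesis using 1 2 3 wt_esum[of p "Wc y c"] wt_esum[of p y] by (simp add: algebra_simps)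
qed

lemma A_deg_Wc:
  assumes y: "y \<in> A_basis"
  shows "A_deg p (Wc y c) = A_deg p y + qq p * int (c + wt p y)"
proof -
  let ?E = "{k. snd y k \<noteq> 0}"
  have fT: "finite (fst y)" using A_basisD[OF y] by auto
  have 1: "(\<Sum>n\<in>fst (Wc y c). 2 * int p ^ n - 1) = (\<Sum>n\<in>fst y. 2 * int p ^ n - 1) + qq p * (\<Sum>n\<in>fst y. int p ^ n)"
  proof -
    have "(\<Sum>n\<in>fst (Wc y c). 2 * int p ^ n - 1) = (\<Sum>n\<in>fst y. 2 * int p ^ Suc n - 1)"
      by (simp add: Wc_def sum.reindex)
    also have "\<dots> = (\<Sum>n\<in>fst y. (2 * int p ^ n - 1) + qq p * int p ^ n)"
      by (rule sum.cong) (auto simp: qq_def algebra_simps)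
    finally show ?thesis by (simp add: sum.distrib sum_distrib_left)
  qed
  have 2: "(\<Sum>k\<in>{k. snd (Wc y c) k \<noteq> 0}. int (snd (Wc y c) k) * 2 * (int p ^ k - 1))
      = int c * 2 * (int p - 1) + (\<Sum>k\<in>?E. int (snd y k) * 2 * (int p ^ Suc k - 1))"
    using Wc_sum[OF y, of "\<lambda>a k. int a * 2 * (int p ^ k - 1)" c] by simp
  have 3: "(\<Sum>k\<in>?E. int (snd y k) * 2 * (int p ^ Suc k - 1))
      = (\<Sum>k\<in>?E. int (snd y k) * 2 * (int p ^ k - 1)) + qq p * (\<Sum>k\<in>?E. int (snd y k) * int p ^ k)"
  proof -
    have "(\<Sum>k\<in>?E. int (snd y k) * 2 * (int p ^ Suc k - 1))
       = (\<Sum>k\<in>?E. int (snd y k) * 2 * (int p ^ k - 1) + qq p * (int (snd y k) * int p ^ k))"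
      by (rule sum.cong) (auto simp: qq_def algebra_simps)
    then show ?thesis by (simp add: sum.distrib sum_distrib_left)
  qed
  have 4: "int (wt p y) = (\<Sum>n\<in>fst y. int p ^ n) + (\<Sum>k\<in>?E. int (snd y k) * int p ^ k)"
    by (simp add: wt_def)
  show ?thesis
    unfolding A_deg_def using 1 2 3 4 by (simp add: qq_def algebra_simps)
qed

lemma Wc_basis:
  assumes y: "y \<in> A_basis"
  shows "Wc y c \<in> A_basis" "\<forall>n\<in>fst (Wc y c). 3 \<le> n"
proof -
  have "finite {k. snd (Wc y c) k \<noteq> 0}" using Wc_supp[OF y] by (metis finite_subset)
  then show "Wc y c \<in> A_basis" using A_basisD[OF y] by (auto simp: A_basis_def Wc_def)
  show "\<forall>n\<in>fst (Wc y c). 3 \<le> n" using A_basisD[OF y] by (auto simp: Wc_def)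
qed

lemma Wc_inj:
  assumes y: "y \<in> A_basis" and y': "y' \<in> A_basis" and eq: "Wc y c = Wc y' c'"
  shows "y = y'" "c = c'"
proof -
  have "Suc ` fst y = Suc ` fst y'" using eq by (simp add: Wc_def)
  then have 1: "fst y = fst y'" by (simp add: inj_image_eq_iff)
  have "snd y i = snd y' i" for i
  proof (cases i)
    case 0 then show ?thesis using A_basisD(4)[OF y] A_basisD(4)[OF y'] by simp
  next
    case (Suc k)
    have "snd (Wc y c) (Suc i) = snd (Wc y' c') (Suc i)" using eq by simp
    then show ?thesis using Suc by (simp add: Wc_def)
  qed
  then show "y = y'" using 1 by (simp add: prod_eq_iff fun_eq_iff)
  have "snd (Wc y c) 1 = snd (Wc y' c') 1" using eq by simp
  then show "c = c'" by (simp add: Wc_def)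
qed

definition ydown :: "amon \<Rightarrow> amon" where
  "ydown m = ((\<lambda>n. n - 1) ` fst m, \<lambda>i. if i = 0 then 0 else snd m (Suc i))"

lemma ydown_basis:
  assumes m: "m \<in> A_basis" and m3: "\<forall>n\<in>fst m. 3 \<le> n"
  shows "ydown m \<in> A_basis"
proof -
  have "{k. snd (ydown m) k \<noteq> 0} \<subseteq> (\<lambda>k. k - 1) ` {k. snd m k \<noteq> 0}"
  proof
    fix k assume "k \<in> {k. snd (ydown m) k \<noteq> 0}"
    then have "snd m (Suc k) \<noteq> 0" by (simp add: ydown_def split: if_splits)
    then show "k \<in> (\<lambda>k. k - 1) ` {k. snd m k \<noteq> 0}" by (intro image_eqI[where x="Suc k"]) auto
  qed
  then have "finite {k. snd (ydown m) k \<noteq> 0}" using A_basisD(3)[OF m] by (metis finite_imageI finite_subset)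
  then show ?thesis using A_basisD[OF m] m3 by (auto simp: A_basis_def ydown_def)
qed

lemma Wc_ydown:
  assumes m: "m \<in> A_basis" and m1: "\<forall>n\<in>fst m. 1 \<le> n"
  shows "Wc (ydown m) (snd m 1) = m"
proof -
  have f1: "Suc ` fst (ydown m) = fst m"
  proof -
    have "fst (ydown m) = (\<lambda>n. n - 1) ` fst m" by (simp add: ydown_def)
    moreover have "Suc ` (\<lambda>n. n - 1) ` fst m = fst m"
    proof -
    have "Suc ` (\<lambda>n. n - 1) ` fst m = (\<lambda>n. Suc (n - 1)) ` fst m" by (simp add: image_image)
    also have "\<dots> = (\<lambda>n. n) ` fst m" by (rule image_cong) (use m1 in auto)
    finally show ?thesis by simp
  qed
    ultimately show ?thesis by simp
  qed
  moreover have f2: "(\<lambda>i. if i = 0 then 0 else if i = 1 then snd m 1 else snd (ydown m) (i - 1)) = snd m"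
  proof
    fix i show "(if i = 0 then 0 else if i = 1 then snd m 1 else snd (ydown m) (i - 1)) = snd m i"
      using A_basisD(4)[OF m] by (cases i) (auto simp: ydown_def)
  qed
  show ?thesis unfolding Wc_def f1 f2 by simp
qed

lemma dvd_wt:
  assumes y: "y \<in> A_basis"
  shows "p dvd wt p y"
proof -
  have "p dvd (\<Sum>n\<in>fst y. p ^ n)"
    by (rule dvd_sum) (use A_basisD(2)[OF y] in \<open>auto intro: dvd_power\<close>)
  moreover have "p dvd esum p (snd y)"
    unfolding esum_def
  proof (rule dvd_sum)
    fix k assume "k \<in> {k. snd y k \<noteq> 0}"
    then have "k \<noteq> 0" using A_basisD(4)[OF y] by (intro notI) simp
    then show "p dvd snd y k * p ^ k" by (simp add: dvd_power)
  qed
  ultimately show ?thesis by (simp add: wt_esum)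
qed

lemma Wm_decomp:
  assumes p: "0 < p" and m: "m \<in> A_basis" and m3: "\<forall>n\<in>fst m. 3 \<le> n"
    and w: "wt p m = p * (p * a + k)" and k: "k < p"
  shows "\<exists>y. y \<in> A_basis \<and> wt p y \<le> p * a \<and> m = Wm p (p * a) k y"
proof -
  define y where "y = ydown m"
  have y: "y \<in> A_basis" using ydown_basis[OF m m3] y_def by simp
  have m1: "\<forall>n\<in>fst m. 1 \<le> n" using m3 by auto
  have mW: "Wc y (snd m 1) = m" using Wc_ydown[OF m m1] y_def by simp
  have "wt p m = p * snd m 1 + p * wt p y" using wt_Wc[OF y, of p "snd m 1"] mW by simp
  then have s: "snd m 1 + wt p y = p * a + k" using w p by (metis add_mult_distrib2 mult_left_cancel not_gr0)
  obtain t where t: "wt p y = p * t" using dvd_wt[OF y, of p] by (auto elim: dvdE)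
  have ta: "t \<le> a"
  proof (rule ccontr)
    assume "\<not> t \<le> a"
    then have "p * (a + 1) \<le> p * t" using mult_le_mono2[of "a+1" t p] by simp
    then show False using s t k by (simp add: algebra_simps)
  qed
  have "p * t \<le> p * a" using ta by simp
  then have "snd m 1 = k + (p * a - wt p y)" using s t by simp
  then have "m = Wm p (p * a) k y" using mW by (simp add: Wm_Wc)
  moreover have "wt p y \<le> p * a" using t ta by simp
  ultimately show ?thesis using y by blast
qed



lemma codes_ge3:
  assumes "S \<subseteq> {0,1,2}"
  shows "{c \<in> S \<union> (\<lambda>n. n + 3) ` T. 3 \<le> c} = (\<lambda>n::nat. n + 3) ` T"
  using assms by auto

lemma wtb_code:
  assumes "S \<subseteq> {0,1,2}"
  shows "wtb p (S \<union> (\<lambda>n. n + 3) ` T, e) = (\<Sum>n\<in>T. p ^ n) + esum p e"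
  unfolding wtb_def fst_conv snd_conv codes_ge3[OF assms] by (simp add: sum.reindex)

lemma wt2_code:
  assumes "S \<subseteq> {0,1,2}"
  shows "wt2 p (S \<union> (\<lambda>n. n + 3) ` T, e) = (\<Sum>n\<in>T - {2}. p ^ n) + esum p e"
proof -
  have "{c \<in> S \<union> (\<lambda>n. n + 3) ` T. 3 \<le> c \<and> c \<noteq> 5} = (\<lambda>n. n + 3) ` (T - {2})"
    using assms by auto
  then show ?thesis unfolding wt2_def fst_conv snd_conv by (simp add: sum.reindex)
qed

lemma wtb_code_wt:
  assumes "S \<subseteq> {0,1,2}"
  shows "wtb p (S \<union> (\<lambda>n. n + 3) ` fst x, snd x) = wt p x"
  using wtb_code[OF assms] wt_esum by simp

lemma wt2_code_wt:
  assumes "S \<subseteq> {0,1,2}"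
  shows "wt2 p (S \<union> (\<lambda>n. n + 3) ` fst x, snd x) = wt p (fst x - {2}, snd x)"
  using wt2_code[OF assms] wt_esum[of p "(fst x - {2}, snd x)"] by simp

lemma sh_code:
  assumes "S \<subseteq> {0,1,2}"
  shows "sh ` (S \<union> (\<lambda>n. n + 3) ` T) = S \<union> (\<lambda>n. n + 3) ` (Suc ` T)"
proof -
  have "sh ` S = S"
  proof -
    have "sh ` S = (\<lambda>c. c) ` S" by (rule image_cong) (use assms in \<open>auto simp: sh_def\<close>)
    then show ?thesis by simp
  qed
  moreover have "sh ` (\<lambda>n. n + 3) ` T = (\<lambda>n. n + 3) ` (Suc ` T)"
  proof -
    have "\<And>n. sh (n + 3) = Suc n + 3" by (simp add: sh_def)
    then show ?thesis by (simp add: image_image)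
  qed
  ultimately show ?thesis by (simp add: image_Un)
qed

lemma Phi_code:
  assumes "S \<subseteq> {0,1,2}"
  shows "Phi p N r (S \<union> (\<lambda>n. n + 3) ` fst x, snd x) = (S \<union> (\<lambda>n. n + 3) ` fst (Wm p N r x), snd (Wm p N r x))"
proof -
  have f: "fst (Phi p N r (S \<union> (\<lambda>n. n + 3) ` fst x, snd x)) = S \<union> (\<lambda>n. n + 3) ` fst (Wm p N r x)"
    using sh_code[OF assms, of "fst x"] by (simp add: Phi_def Wm_def)
  have s: "snd (Phi p N r (S \<union> (\<lambda>n. n + 3) ` fst x, snd x)) = snd (Wm p N r x)"
    unfolding Phi_def Wm_def wtb_code_wt[OF assms, of p x] snd_conv by (rule refl)
  show ?thesis using f s by (simp add: prod_eq_iff)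
qed

lemma code_Dset:
  assumes "S \<subseteq> {0,1,2}" "x \<in> A_basis" "wt p x \<le> N"
  shows "(S \<union> (\<lambda>n. n + 3) ` fst x, snd x) \<in> Dset p N"
  using A_basisD[OF assms(2)] assms(3) wtb_code_wt[OF assms(1), of p x] finite_subset[OF assms(1)]
  by (simp add: Dset_def)

lemma AT1:
  assumes p: "0 < p" and x: "x \<in> A_basis" and x': "x' \<in> A_basis"
    and w: "wt p x \<le> N" and w': "wt p x' \<le> N" and S: "S \<subseteq> {0,1,2}"
  shows "A_co p S (Wm p N r x) (Wm p N r x') = (A_co p S x x' :: 'k::field)"
proof -
  have R: "rep (Phi p N r) (Dset p N) (alpha_A p x :: bmon \<Rightarrow> 'k) (alpha_A p (Wm p N r x))"
    by (rule rep_alpha[OF p x w])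
  have D: "(S \<union> (\<lambda>n. n + 3) ` fst x', snd x') \<in> Dset p N" by (rule code_Dset[OF S x' w'])
  show ?thesis
    using R D unfolding A_co_def rep_def Phi_code[OF S, symmetric] by blast
qed

lemma AS:
  assumes p: "0 < p" and x: "x \<in> A_basis" and S: "S \<subseteq> {0,1,2}"
    and nz: "A_co p S x c \<noteq> (0::'k::field)"
  shows "c \<in> A_basis" "wt p c \<le> wt p x" "card (fst x) = card S + card (fst c)"
    "wt p (fst x - {2}, snd x) \<le> wt p (fst c - {2}, snd c)"
proof -
  let ?u = "(S \<union> (\<lambda>n. n + 3) ` fst c, snd c)"
  have nz': "alpha_A p x ?u \<noteq> (0::'k)" using nz by (simp add: A_co_def)
  note sp = supp_alpha[OF p x nz']
  have sub: "fst c \<subseteq> fst x"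
  proof
    fix n assume "n \<in> fst c"
    then have "n + 3 \<in> fst ?u" by simp
    then have "n + 3 \<in> {0,1,2} \<union> (\<lambda>n. n + 3) ` fst x" using sp(1) by blast
    then show "n \<in> fst x" by auto
  qed
  have fx: "finite (fst x)" using A_basisD[OF x] by simp
  have fc: "finite (fst c)" using finite_subset[OF sub fx] .
  show "c \<in> A_basis" using sp(4,5) sub A_basisD[OF x] fc by (auto simp: A_basis_def)
  show "wt p c \<le> wt p x" using sp(6) wtb_code_wt[OF S, of p c] by simp
  have "card (fst ?u) = card S + card (fst c)"
  proof -
    have "S \<inter> (\<lambda>n. n + 3) ` fst c = {}" using S by auto
    moreover have "finite S" using S finite_subset by blast
    ultimately show ?thesis using fc by (simp add: card_Un_disjoint card_image)
  qed
  then show "card (fst x) = card S + card (fst c)" using sp(2) by simp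
  show "wt p (fst x - {2}, snd x) \<le> wt p (fst c - {2}, snd c)" using sp(7) wt2_code_wt[OF S, of p c] by simp
qed

lemma AT2:
  assumes p: "0 < p" and x: "x \<in> A_basis" and w: "wt p x \<le> N" and S: "S \<subseteq> {0,1,2}"
    and nz: "A_co p S (Wm p N r x) c \<noteq> (0::'k::field)"
  shows "\<exists>x'. x' \<in> A_basis \<and> wt p x' \<le> wt p x \<and> c = Wm p N r x'"
proof -
  have R: "rep (Phi p N r) (Dset p N) (alpha_A p x :: bmon \<Rightarrow> 'k) (alpha_A p (Wm p N r x))"
    by (rule rep_alpha[OF p x w])
  let ?v = "(S \<union> (\<lambda>n. n + 3) ` fst c, snd c)"
  have nz': "alpha_A p (Wm p N r x) ?v \<noteq> (0::'k)" using nz by (simp add: A_co_def)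
  obtain u where u: "u \<in> Dset p N" "?v = Phi p N r u" using R nz' unfolding rep_def by blast
  have nzu: "alpha_A p x u \<noteq> (0::'k)" using R u nz' unfolding rep_def by metis
  note sp = supp_alpha[OF p x nzu]
  define T' where "T' = {n. n + 3 \<in> fst u}"
  define S' where "S' = fst u \<inter> {0,1,2}"
  have S': "S' \<subseteq> {0,1,2}" by (simp add: S'_def)
  have fu: "fst u = S' \<union> (\<lambda>n. n + 3) ` T'"
  proof
    show "fst u \<subseteq> S' \<union> (\<lambda>n. n + 3) ` T'"
    proof
      fix c assume c: "c \<in> fst u"
      show "c \<in> S' \<union> (\<lambda>n. n + 3) ` T'"
      proof (cases "c \<le> 2")
        case True then show ?thesis using c by (auto simp: S'_def)
      next
        case False
        then have "c = (c - 3) + 3" by simp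
        then show ?thesis using c T'_def by (metis (mono_tags, lifting) UnI2 image_eqI mem_Collect_eq)
      qed
    qed
    show "S' \<union> (\<lambda>n. n + 3) ` T' \<subseteq> fst u" by (auto simp: S'_def T'_def)
  qed
  have T'x: "T' \<subseteq> fst x"
  proof
    fix n assume "n \<in> T'"
    then have "n + 3 \<in> {0,1,2} \<union> (\<lambda>n. n + 3) ` fst x" using sp(1) by (auto simp: T'_def)
    then show "n \<in> fst x" by auto
  qed
  define x' where "x' = (T', snd u)"
  have fT': "finite T'" using finite_subset[OF T'x] A_basisD(1)[OF x] by blast
  have x'b: "x' \<in> A_basis" using fT' T'x A_basisD(2)[OF x] sp(4,5) by (auto simp: A_basis_def x'_def)
  have ux: "u = (S' \<union> (\<lambda>n. n + 3) ` fst x', snd x')" using fu by (simp add: x'_def prod_eq_iff)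
  have wx': "wt p x' = wtb p u" using wtb_code_wt[OF S', of p x'] ux by simp
  have wle: "wt p x' \<le> wt p x" using wx' sp(6) by simp
  have eq: "?v = (S' \<union> (\<lambda>n. n + 3) ` fst (Wm p N r x'), snd (Wm p N r x'))"
    using u(2) Phi_code[OF S', of p N r x'] ux by simp
  have "fst c = fst (Wm p N r x')"
  proof -
    have "n \<in> fst c \<longleftrightarrow> n \<in> fst (Wm p N r x')" for n
    proof -
      have "n \<in> fst c \<longleftrightarrow> n + 3 \<in> fst ?v" using S by auto
      also have "\<dots> \<longleftrightarrow> n + 3 \<in> S' \<union> (\<lambda>n. n + 3) ` fst (Wm p N r x')" using eq by simp
      also have "\<dots> \<longleftrightarrow> n \<in> fst (Wm p N r x')" using S' by auto
      finally show ?thesis .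
    qed
    then show ?thesis by blast
  qed
  moreover have "snd c = snd (Wm p N r x')" using eq by simp
  ultimately have "c = Wm p N r x'" by (simp add: prod_eq_iff)
  then show ?thesis using x'b wle by blast
qed



lemma osign_empty[simp]: "osign {} U = 1"
  by (simp add: osign_def)

lemma osign_empty2[simp]: "osign U {} = 1"
  by (simp add: osign_def)

lemma osign_5: "osign {5::nat} U = (-1) ^ card {c\<in>U. c < 5}"
proof -
  have "{(u, v). u \<in> {5::nat} \<and> v \<in> U \<and> v < u} = (\<lambda>v. (5, v)) ` {c\<in>U. c < 5}" by auto
  moreover have "card ((\<lambda>v. (5::nat, v)) ` {c\<in>U. c < 5}) = card {c\<in>U. c < 5}"
    by (rule card_image) (auto simp: inj_on_def)
  ultimately show ?thesis unfolding osign_def by simp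
qed

lemma bmul_single_left:
  "bmul (bsingle ({}, e) (1::'k::field)) F (U, e'') = (if (\<forall>k. e k \<le> e'' k) then F (U, \<lambda>k. e'' k - e k) else 0)"
proof -
  define X where "X = {(a, b). bsingle ({}, e) (1::'k) a \<noteq> 0 \<and> F b \<noteq> 0 \<and> fst a \<inter> fst b = {}
                          \<and> (fst a \<union> fst b, \<lambda>k. snd a k + snd b k) = (U, e'')}"
  have bm: "bmul (bsingle ({}, e) (1::'k)) F (U, e'') = (\<Sum>(a, b)\<in>X. osign (fst a) (fst b) * bsingle ({}, e) 1 a * F b)"
    unfolding bmul_def X_def by simp
  have mem: "z \<in> X \<longleftrightarrow> z = (({}, e), (U, \<lambda>k. e'' k - e k)) \<and> (\<forall>k. e k \<le> e'' k) \<and> F (U, \<lambda>k. e'' k - e k) \<noteq> 0" for z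
  proof
    assume z: "z \<in> X"
    obtain a b where ab: "z = (a, b)" by (cases z)
    have a: "a = ({}, e)" using z ab by (auto simp: X_def bsingle_def split: if_splits)
    have fb: "fst b = U" using z ab a by (simp add: X_def)
    have sb: "(\<lambda>k. e k + snd b k) = e''" using z ab a by (simp add: X_def)
    then have le: "\<forall>k. e k \<le> e'' k" by (metis le_add1)
    have sb': "snd b = (\<lambda>k. e'' k - e k)" using sb by auto
    have b: "b = (U, \<lambda>k. e'' k - e k)" using fb sb' by (simp add: prod_eq_iff)
    have "F b \<noteq> 0" using z ab by (simp add: X_def)
    then show "z = (({}, e), (U, \<lambda>k. e'' k - e k)) \<and> (\<forall>k. e k \<le> e'' k) \<and> F (U, \<lambda>k. e'' k - e k) \<noteq> 0"
      using ab a b le by simp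
  next
    assume "z = (({}, e), (U, \<lambda>k. e'' k - e k)) \<and> (\<forall>k. e k \<le> e'' k) \<and> F (U, \<lambda>k. e'' k - e k) \<noteq> 0"
    then show "z \<in> X" by (auto simp: X_def bsingle_def fun_eq_iff)
  qed
  show ?thesis
  proof (cases "(\<forall>k. e k \<le> e'' k) \<and> F (U, \<lambda>k. e'' k - e k) \<noteq> 0")
    case True
    then have "X = {(({}, e), (U, \<lambda>k. e'' k - e k))}" using mem by blast
    then show ?thesis using bm True by (simp add: bsingle_def)
  next
    case False
    then have "X = {}" using mem by blast
    then show ?thesis using bm False by auto
  qed
qed

lemma alpha_tb2_5: "alpha_tb p 2 ({5}, \<lambda>_. 0) = (1::'k::field)"
  unfolding alpha_tb_expand bsingle_def by simp

lemma bmul_tb2: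
  assumes U: "5 \<notin> U" and R: "\<forall>b. R b \<noteq> 0 \<longrightarrow> 5 \<notin> fst b"
  shows "bmul (alpha_tb p 2) R (insert 5 U, e') = (-1) ^ card {c\<in>U. c < (5::nat)} * (R (U, e') :: 'k::field)"
proof -
  define X where "X = {(a, b). alpha_tb p 2 a \<noteq> (0::'k) \<and> R b \<noteq> 0 \<and> fst a \<inter> fst b = {}
                          \<and> (fst a \<union> fst b, \<lambda>k. snd a k + snd b k) = (insert 5 U, e')}"
  have bm: "bmul (alpha_tb p 2) R (insert 5 U, e') = (\<Sum>(a, b)\<in>X. osign (fst a) (fst b) * alpha_tb p 2 a * R b)"
    unfolding bmul_def X_def by simp
  have mem: "z \<in> X \<longleftrightarrow> z = (({5}, \<lambda>_. 0), (U, e')) \<and> R (U, e') \<noteq> 0" for z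
  proof
    assume z: "z \<in> X"
    obtain a b where ab: "z = (a, b)" by (cases z)
    have nz: "alpha_tb p 2 a \<noteq> (0::'k)" and Rb: "R b \<noteq> 0" and d: "fst a \<inter> fst b = {}"
      and fu: "fst a \<union> fst b = insert 5 U" and su: "(\<lambda>k. snd a k + snd b k) = e'"
      using z ab by (auto simp: X_def)
    have 5: "5 \<notin> fst b" using R Rb by blast
    then have "5 \<in> fst a" using fu by blast
    then have a5: "5 \<in> fst a" .
    have a: "a = ({5}, \<lambda>_. 0)"
    proof (rule ccontr)
      assume na: "a \<noteq> ({5}, \<lambda>_. 0)"
      have "a \<noteq> ({0}, zexp (2 - 0) (p ^ 0))" "a \<noteq> ({1}, zexp (2 - 1) (p ^ 1))"
        "a \<noteq> ({2}, zexp (2 - 2) (p ^ 2))" using a5 by auto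
      then have "alpha_tb p 2 a = (0::'k)" using na unfolding alpha_tb_expand bsingle_def by simp
      then show False using nz by simp
    qed
    have "insert 5 (fst b) = insert 5 U" using fu unfolding a by simp
    then have fb: "fst b = U" using 5 U by (metis insert_ident)
    have sb: "snd b = e'" using su a by (simp add: fun_eq_iff)
    have "b = (U, e')" using fb sb by (simp add: prod_eq_iff)
    then show "z = (({5}, \<lambda>_. 0), (U, e')) \<and> R (U, e') \<noteq> 0" using ab a Rb by simp
  next
    assume "z = (({5}, \<lambda>_. 0), (U, e')) \<and> R (U, e') \<noteq> 0"
    then show "z \<in> X" using U by (auto simp: X_def alpha_tb2_5)
  qed
  show ?thesis
  proof (cases "R (U, e') \<noteq> 0")
    case True
    then have "X = {(({5}, \<lambda>_. 0), (U, e'))}" using mem by blast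
    then show ?thesis using bm by (simp add: alpha_tb2_5 osign_5)
  next
    case False
    then have "X = {}" using mem by blast
    then show ?thesis using bm False by simp
  qed
qed

lemma alpha_split2:
  assumes p: "0 < p" and x: "x \<in> A_basis" and x2: "2 \<in> fst x" and U: "5 \<notin> U"
  shows "alpha_A p x (insert 5 U, e'') = (-1) ^ card {c\<in>U. c < (5::nat)} * (alpha_A p (fst x - {2}, snd x) (U, e'') :: 'k::field)"
proof -
  let ?T = "fst x - {2}"
  have fT: "finite ?T" using A_basisD(1)[OF x] by simp
  have T2: "\<forall>n\<in>?T. 2 < n" using A_basisD(2)[OF x] by force
  have ins: "insert 2 ?T = fst x" using x2 by auto
  have sl: "sorted_list_of_set (fst x) = 2 # sorted_list_of_set ?T"
    using sl_insert2[OF fT T2] unfolding ins .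
  define R where "R = foldr bmul (map (alpha_tb p) (sorted_list_of_set ?T)) (bsingle ({}, \<lambda>_. 0) (1::'k))"
  have R5: "\<forall>b. R b \<noteq> 0 \<longrightarrow> 5 \<notin> fst b"
  proof (intro allI impI)
    fix b assume Rb: "R b \<noteq> 0"
    have T2': "\<forall>n\<in>set (sorted_list_of_set ?T). 2 \<le> n" using T2 fT by (simp add: less_imp_le)
    have "fst b \<subseteq> {0,1,2} \<union> (\<lambda>n. n + 3) ` set (sorted_list_of_set ?T)"
      using supp_foldr[OF p T2' Rb[unfolded R_def]] by blast
    then have "fst b \<subseteq> {0,1,2} \<union> (\<lambda>n. n + 3) ` ?T" using fT by simp
    then show "5 \<notin> fst b" by auto
  qed
  have ax: "alpha_A p x = bmul (bsingle ({}, snd x) (1::'k)) (bmul (alpha_tb p 2) R)"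
    unfolding alpha_A_def sl R_def by simp
  have am: "alpha_A p (?T, snd x) = bmul (bsingle ({}, snd x) (1::'k)) R"
    unfolding alpha_A_def R_def by simp
  show ?thesis
    unfolding ax am bmul_single_left bmul_tb2[OF U R5] by simp
qed



definition push :: "('a \<Rightarrow> 'b) \<Rightarrow> 'a set \<Rightarrow> ('a \<Rightarrow> 'k::field) \<Rightarrow> ('b \<Rightarrow> 'k)" where
  "push \<phi> B v = (\<lambda>c. if c \<in> \<phi> ` B then v (inv_into B \<phi> c) else 0)"

definition pull :: "('b \<Rightarrow> 'a) \<Rightarrow> 'b set \<Rightarrow> ('b \<Rightarrow> 'k::field) \<Rightarrow> ('a \<Rightarrow> 'k) \<Rightarrow> ('b \<Rightarrow> 'k)" where
  "pull \<psi> B \<sigma> v = (\<lambda>d. if d \<in> B then \<sigma> d * v (\<psi> d) else 0)"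

lemma vecsD:
  assumes "v \<in> vecs M"
  shows "finite {b. v b \<noteq> 0}" "{b. v b \<noteq> 0} \<subseteq> basis M" "\<And>b. b \<notin> basis M \<Longrightarrow> v b = 0"
  using assms by (auto simp: vecs_def)

lemma lin_co_alt:
  assumes "finite A" "{b. v b \<noteq> 0} \<subseteq> A"
  shows "lin_co M S v c = (\<Sum>b\<in>A. v b * bco M S b c)"
  unfolding lin_co_def by (rule sum.mono_neutral_left) (use assms in auto)

lemma push_at:
  assumes "inj_on \<phi> B" "b \<in> B"
  shows "push \<phi> B v (\<phi> b) = v b"
  using assms by (simp add: push_def)

lemma push_supp:
  assumes "inj_on \<phi> B" "{b. v b \<noteq> 0} \<subseteq> B"
  shows "{c. push \<phi> B v c \<noteq> 0} = \<phi> ` {b. v b \<noteq> 0}"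
proof
  show "{c. push \<phi> B v c \<noteq> 0} \<subseteq> \<phi> ` {b. v b \<noteq> 0}"
  proof
    fix c assume "c \<in> {c. push \<phi> B v c \<noteq> 0}"
    then have c: "c \<in> \<phi> ` B" "v (inv_into B \<phi> c) \<noteq> 0" by (auto simp: push_def split: if_splits)
    then show "c \<in> \<phi> ` {b. v b \<noteq> 0}" by (metis (mono_tags, lifting) f_inv_into_f image_eqI mem_Collect_eq)
  qed
  show "\<phi> ` {b. v b \<noteq> 0} \<subseteq> {c. push \<phi> B v c \<noteq> 0}"
  proof
    fix c assume "c \<in> \<phi> ` {b. v b \<noteq> 0}"
    then obtain b where b: "v b \<noteq> 0" "c = \<phi> b" by blast
    have bB: "b \<in> B" using b assms(2) by blast
    show "c \<in> {c. push \<phi> B v c \<noteq> 0}" using b push_at[OF assms(1) bB, of v] by simp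
  qed
qed

lemma push_comod:
  assumes inj: "inj_on \<phi> (basis M)" and img: "\<phi> ` basis M \<subseteq> basis N"
    and deg: "\<forall>b\<in>basis M. bdeg N (\<phi> b) = bdeg M b"
    and co: "\<And>S b c. S \<subseteq> {0,1,2} \<Longrightarrow> b \<in> basis M \<Longrightarrow>
       bco N S (\<phi> b) c = (if c \<in> \<phi> ` basis M then bco M S b (inv_into (basis M) \<phi> c) else 0)"
  shows "comod_map M N (push \<phi> (basis M))"
  unfolding comod_map_def
proof (intro conjI ballI allI impI)
  fix v assume v: "v \<in> vecs M"
  note V = vecsD[OF v]
  have s: "{c. push \<phi> (basis M) v c \<noteq> 0} = \<phi> ` {b. v b \<noteq> 0}" by (rule push_supp[OF inj V(2)])
  have fs: "finite {c. push \<phi> (basis M) v c \<noteq> 0}" unfolding s using V(1) by (rule finite_imageI)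
  have bs: "\<forall>c. push \<phi> (basis M) v c \<noteq> 0 \<longrightarrow> c \<in> basis N"
  proof (intro allI impI)
    fix c assume "push \<phi> (basis M) v c \<noteq> 0"
    then have "c \<in> \<phi> ` {b. v b \<noteq> 0}" using s by blast
    then have "c \<in> \<phi> ` basis M" using V(2) by blast
    then show "c \<in> basis N" using img by blast
  qed
  show "push \<phi> (basis M) v \<in> vecs N"
    unfolding vecs_def mem_Collect_eq using fs bs by blast
  {
    fix d assume h: "homog M d v"
    show "homog N d (push \<phi> (basis M) v)"
      unfolding homog_def
    proof (intro allI impI)
      fix c assume "push \<phi> (basis M) v c \<noteq> 0"
      then obtain b where b: "v b \<noteq> 0" "c = \<phi> b" using s by blast
      then have "b \<in> basis M" using V by blast
      then show "bdeg N c = d" using deg h b unfolding homog_def by auto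
    qed
  }
  {
    fix w assume w: "w \<in> vecs M"
    show "push \<phi> (basis M) (\<lambda>x. v x + w x) = (\<lambda>y. push \<phi> (basis M) v y + push \<phi> (basis M) w y)"
      by (simp add: push_def fun_eq_iff)
  }
  {
    fix c
    show "push \<phi> (basis M) (\<lambda>x. c * v x) = (\<lambda>y. c * push \<phi> (basis M) v y)"
      by (simp add: push_def fun_eq_iff)
  }
  {
    fix S :: "nat set" assume S: "S \<subseteq> {0,1,2}"
    let ?V = "{b. v b \<noteq> 0}"
    have injV: "inj_on \<phi> ?V" using inj V(2) by (rule inj_on_subset)
    show "push \<phi> (basis M) (lin_co M S v) = lin_co N S (push \<phi> (basis M) v)"
    proof
      fix c
      have "lin_co N S (push \<phi> (basis M) v) c = (\<Sum>c'\<in>\<phi> ` ?V. push \<phi> (basis M) v c' * bco N S c' c)"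
        unfolding lin_co_def s ..
      also have "\<dots> = (\<Sum>b\<in>?V. push \<phi> (basis M) v (\<phi> b) * bco N S (\<phi> b) c)"
        by (simp add: sum.reindex[OF injV])
      also have "\<dots> = (\<Sum>b\<in>?V. v b * (if c \<in> \<phi> ` basis M then bco M S b (inv_into (basis M) \<phi> c) else 0))"
      proof (rule sum.cong)
        fix b assume "b \<in> ?V"
        then have b: "b \<in> basis M" using V by blast
        show "push \<phi> (basis M) v (\<phi> b) * bco N S (\<phi> b) c
           = v b * (if c \<in> \<phi> ` basis M then bco M S b (inv_into (basis M) \<phi> c) else 0)"
          using push_at[OF inj b, of v] co[OF S b, of c] by simp
      qed simp
      also have "\<dots> = push \<phi> (basis M) (lin_co M S v) c"
        by (simp add: push_def lin_co_def)
      finally show "push \<phi> (basis M) (lin_co M S v) c = lin_co N S (push \<phi> (basis M) v) c" by simp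
    qed
  }
qed

lemma pull_supp:
  assumes "\<And>d. \<sigma> d \<noteq> 0"
  shows "{d. pull \<psi> B \<sigma> v d \<noteq> 0} = {d\<in>B. v (\<psi> d) \<noteq> 0}"
  using assms by (auto simp: pull_def)

lemma pull_comod:
  assumes inj: "inj_on \<psi> (basis N)"
    and deg: "\<forall>d\<in>basis N. bdeg M (\<psi> d) = bdeg N d"
    and sig: "\<And>d. \<sigma> d \<noteq> 0"
    and co: "\<And>S b d. S \<subseteq> {0,1,2} \<Longrightarrow> b \<in> basis M \<Longrightarrow> d \<in> basis N \<Longrightarrow>
       \<sigma> d * bco M S b (\<psi> d) = (if b \<in> \<psi> ` basis N then \<sigma> (inv_into (basis N) \<psi> b) * bco N S (inv_into (basis N) \<psi> b) d else 0)"
    and cl: "\<And>S d' d. S \<subseteq> {0,1,2} \<Longrightarrow> d' \<in> basis N \<Longrightarrow> d \<notin> basis N \<Longrightarrow> bco N S d' d = 0"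
  shows "comod_map M N (pull \<psi> (basis N) \<sigma>)"
  unfolding comod_map_def
proof (intro conjI ballI allI impI)
  fix v assume v: "v \<in> vecs M"
  note V = vecsD[OF v]
  let ?W = "{d\<in>basis N. v (\<psi> d) \<noteq> 0}"
  have s: "{d. pull \<psi> (basis N) \<sigma> v d \<noteq> 0} = ?W" by (rule pull_supp[OF sig])
  have injW: "inj_on \<psi> ?W" using inj by (rule inj_on_subset) auto
  have imW: "\<psi> ` ?W = {b. v b \<noteq> 0} \<inter> \<psi> ` basis N" by auto
  have fW: "finite ?W"
  proof -
    have "finite (\<psi> ` ?W)" using imW V(1) by simp
    then show ?thesis using finite_imageD[OF _ injW] by blast
  qed
  have bs: "\<forall>c. pull \<psi> (basis N) \<sigma> v c \<noteq> 0 \<longrightarrow> c \<in> basis N" using s by blast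
  show "pull \<psi> (basis N) \<sigma> v \<in> vecs N"
    unfolding vecs_def mem_Collect_eq s using fW bs by blast
  {
    fix d assume h: "homog M d v"
    show "homog N d (pull \<psi> (basis N) \<sigma> v)"
      unfolding homog_def
    proof (intro allI impI)
      fix c assume "pull \<psi> (basis N) \<sigma> v c \<noteq> 0"
      then have "c \<in> basis N" "v (\<psi> c) \<noteq> 0" using s by blast+
      then show "bdeg N c = d" using deg h unfolding homog_def by auto
    qed
  }
  {
    fix w assume w: "w \<in> vecs M"
    show "pull \<psi> (basis N) \<sigma> (\<lambda>x. v x + w x) = (\<lambda>y. pull \<psi> (basis N) \<sigma> v y + pull \<psi> (basis N) \<sigma> w y)"
      by (simp add: pull_def fun_eq_iff algebra_simps)
  }
  {
    fix c
    show "pull \<psi> (basis N) \<sigma> (\<lambda>x. c * v x) = (\<lambda>y. c * pull \<psi> (basis N) \<sigma> v y)"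
      by (simp add: pull_def fun_eq_iff algebra_simps)
  }
  {
    fix S :: "nat set" assume S: "S \<subseteq> {0,1,2}"
    let ?V = "{b. v b \<noteq> 0}"
    show "pull \<psi> (basis N) \<sigma> (lin_co M S v) = lin_co N S (pull \<psi> (basis N) \<sigma> v)"
    proof
      fix d
      have R: "lin_co N S (pull \<psi> (basis N) \<sigma> v) d = (\<Sum>d'\<in>?W. \<sigma> d' * v (\<psi> d') * bco N S d' d)"
        unfolding lin_co_def s by (rule sum.cong) (auto simp: pull_def)
      show "pull \<psi> (basis N) \<sigma> (lin_co M S v) d = lin_co N S (pull \<psi> (basis N) \<sigma> v) d"
      proof (cases "d \<in> basis N")
        case False
        have "(\<Sum>d'\<in>?W. \<sigma> d' * v (\<psi> d') * bco N S d' d) = 0"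
          by (rule sum.neutral) (use cl[OF S _ False] in auto)
        then show ?thesis using R False by (simp add: pull_def)
      next
        case True
        have "pull \<psi> (basis N) \<sigma> (lin_co M S v) d = \<sigma> d * (\<Sum>b\<in>?V. v b * bco M S b (\<psi> d))"
          using True by (simp add: pull_def lin_co_def)
        also have "\<dots> = (\<Sum>b\<in>?V. v b * (\<sigma> d * bco M S b (\<psi> d)))"
          by (simp add: sum_distrib_left algebra_simps)
        also have "\<dots> = (\<Sum>b\<in>?V. if b \<in> \<psi> ` basis N then v b * (\<sigma> (inv_into (basis N) \<psi> b) * bco N S (inv_into (basis N) \<psi> b) d) else 0)"
        proof (rule sum.cong)
          fix b assume "b \<in> ?V"
          then have b: "b \<in> basis M" using V by blast
          show "v b * (\<sigma> d * bco M S b (\<psi> d)) = (if b \<in> \<psi> ` basis N then v b * (\<sigma> (inv_into (basis N) \<psi> b) * bco N S (inv_into (basis N) \<psi> b) d) else 0)"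
            using co[OF S b True] by simp
        qed simp
        also have "\<dots> = (\<Sum>b\<in>?V \<inter> \<psi> ` basis N. v b * (\<sigma> (inv_into (basis N) \<psi> b) * bco N S (inv_into (basis N) \<psi> b) d))"
          using V(1) by (simp add: sum.inter_restrict)
        also have "\<dots> = (\<Sum>b\<in>\<psi> ` ?W. v b * (\<sigma> (inv_into (basis N) \<psi> b) * bco N S (inv_into (basis N) \<psi> b) d))"
          using imW by simp
        also have "\<dots> = (\<Sum>d'\<in>?W. v (\<psi> d') * (\<sigma> (inv_into (basis N) \<psi> (\<psi> d')) * bco N S (inv_into (basis N) \<psi> (\<psi> d')) d))"
          by (simp add: sum.reindex[OF injW])
        also have "\<dots> = (\<Sum>d'\<in>?W. \<sigma> d' * v (\<psi> d') * bco N S d' d)"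
        proof (rule sum.cong)
          fix d' assume "d' \<in> ?W"
          then have "inv_into (basis N) \<psi> (\<psi> d') = d'" using inv_into_f_f[OF inj] by blast
          then show "v (\<psi> d') * (\<sigma> (inv_into (basis N) \<psi> (\<psi> d')) * bco N S (inv_into (basis N) \<psi> (\<psi> d')) d) = \<sigma> d' * v (\<psi> d') * bco N S d' d"
            by simp
        qed simp
        finally show ?thesis using R by simp
      qed
    qed
  }
qed



lemma sumT_member_le:
  assumes "finite T" "n \<in> T"
  shows "(p::nat) ^ n \<le> (\<Sum>n\<in>T. p ^ n)"
  by (rule member_le_sum[OF assms(2) _ assms(1)]) simp

lemma esum_member_le:
  assumes "finite {k. e k \<noteq> 0}" "e k \<noteq> 0"
  shows "e k * (p::nat) ^ k \<le> esum p e"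
  unfolding esum_def by (rule member_le_sum[where f="\<lambda>k. e k * p ^ k"]) (use assms in auto)

lemma small_ell:
  assumes a: "a \<in> A_basis" and w: "wt p a \<le> p * i" and i: "i < p" and p: "2 \<le> p"
  shows "a = ({}, \<lambda>n. if n = 1 then snd a 1 else 0)" "snd a 1 \<le> i"
proof -
  have "p * i < p * p" using p i by simp
  then have lt: "wt p a < p ^ 2" using le_less_trans[OF w] by (simp add: power2_eq_square)
  have fa: "fst a = {}"
  proof (rule ccontr)
    assume "fst a \<noteq> {}"
    then obtain n where n: "n \<in> fst a" by blast
    have "p ^ 2 \<le> p ^ n" using A_basisD(2)[OF a] n p by (intro power_increasing) auto
    also have "\<dots> \<le> (\<Sum>n\<in>fst a. p ^ n)" using sumT_member_le[OF A_basisD(1)[OF a] n] .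
    also have "\<dots> \<le> wt p a" by (simp add: wt_esum)
    finally show False using lt by simp
  qed
  have sn: "snd a k = 0" if "k \<noteq> 1" for k
  proof (rule ccontr)
    assume nz: "snd a k \<noteq> 0"
    then have k: "k \<ge> 2" using that A_basisD(4)[OF a] by (cases k) auto
    have "p ^ 2 \<le> p ^ k" using k p by (intro power_increasing) auto
    also have "\<dots> \<le> snd a k * p ^ k" using nz by simp
    also have "\<dots> \<le> esum p (snd a)" using esum_member_le[OF A_basisD(3)[OF a] nz] .
    also have "\<dots> \<le> wt p a" by (simp add: wt_esum)
    finally show False using lt by simp
  qed
  show "a = ({}, \<lambda>n. if n = 1 then snd a 1 else 0)"
    using fa sn by (simp add: prod_eq_iff fun_eq_iff)
  show "snd a 1 \<le> i"
  proof (cases "snd a 1 = 0")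
    case False
    have "snd a 1 * p \<le> esum p (snd a)" using esum_member_le[OF A_basisD(3)[OF a] False] by simp
    also have "\<dots> \<le> wt p a" by (simp add: wt_esum)
    finally have h: "snd a 1 * p \<le> wt p a" .
    have "p * snd a 1 \<le> p * i" using le_trans[OF h w] by (simp add: mult.commute)
    then show ?thesis using p by simp
  qed simp
qed

lemma single1_props:
  shows "({}, \<lambda>n. if n = 1 then k else 0) \<in> A_basis"
    "wt p ({}, \<lambda>n. if n = 1 then k else 0) = k * p"
    "A_deg p ({}, \<lambda>n. if n = 1 then k else 0) = qq p * int k"
proof -
  have s: "{n. (if n = 1 then k else 0) \<noteq> 0} \<subseteq> {1}" by auto
  then have f: "finite {n. (if n = 1 then k else 0) \<noteq> (0::nat)}" by (rule finite_subset) simp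
  then show "({}, \<lambda>n. if n = 1 then k else 0) \<in> A_basis" by (simp add: A_basis_def)
  have "esum p (\<lambda>n. if n = 1 then k else 0) = (\<Sum>n\<in>{1}. (if n = 1 then k else 0) * p ^ n)"
    by (rule esum_superset) (use s in auto)
  then show "wt p ({}, \<lambda>n. if n = 1 then k else 0) = k * p" by (simp add: wt_esum)
  have "(\<Sum>n\<in>{n. (if n = 1 then k else 0) \<noteq> 0}. int (if n = 1 then k else 0) * 2 * (int p ^ n - 1))
        = int k * 2 * (int p - 1)"
  proof (cases "k = 0")
    case True then show ?thesis by simp
  next
    case False
    then have seq: "{n. (if n = 1 then k else 0) \<noteq> 0} = {1}" by auto
    show ?thesis unfolding seq by simp
  qed
  then show "A_deg p ({}, \<lambda>n. if n = 1 then k else 0) = qq p * int k"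
    unfolding A_deg_def qq_def fst_conv snd_conv by (simp add: algebra_simps)
qed

lemma A_co_small:
  assumes fa: "fst a = {}"
  shows "A_co p S a a' = (if S \<union> (\<lambda>n. n + 3) ` fst a' = {} \<and> snd a' = snd a then 1 else (0::'k::field))"
proof -
  have al: "alpha_A p a = bmul (bsingle ({}, snd a) (1::'k)) (bsingle ({}, \<lambda>_. 0) 1)"
    unfolding alpha_A_def fa by simp
  have "bmul (bsingle ({}, snd a) (1::'k)) (bsingle ({}, \<lambda>_. 0) 1) (U, e'')
        = (if U = {} \<and> e'' = snd a then 1 else 0)" for U e''
  proof -
    have iff: "((\<forall>k. snd a k \<le> e'' k) \<and> (U, \<lambda>k. e'' k - snd a k) = ({}, \<lambda>_. 0)) = (U = {} \<and> e'' = snd a)"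
      by (auto simp: fun_eq_iff intro: le_antisym)
    have "bmul (bsingle ({}, snd a) (1::'k)) (bsingle ({}, \<lambda>_. 0) 1) (U, e'')
        = (if (\<forall>k. snd a k \<le> e'' k) \<and> (U, \<lambda>k. e'' k - snd a k) = ({}, \<lambda>_. 0) then 1 else 0)"
      unfolding bmul_single_left by (simp add: bsingle_def)
    then show ?thesis unfolding iff .
  qed
  then show ?thesis unfolding A_co_def al by simp
qed

lemma tensor_bco:
  assumes a: "a \<in> A_basis" "fst a = {}" and S: "S \<subseteq> {0,1,2}"
  shows "bco (tensor p M (ell p i)) S (x, a) (x', a') = bco M S x x' * (if a' = a then 1 else (0::'k::field))"
proof -
  define t where "t S1 = osign S1 (S - S1)
             * (if even ((bdeg M x - taudeg p S1) * int (card (S - S1))) then 1 else -1)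
             * bco M S1 x x' * (bco (ell p i) (S - S1) a a' :: 'k)" for S1
  have bt: "bco (tensor p M (ell p i)) S (x, a) (x', a') = (\<Sum>S1\<in>Pow S. t S1)"
    unfolding tensor_def t_def by simp
  have tc: "t S1 = (if S1 = S then bco M S x x' * (if a' = a then 1 else 0) else 0)" if "S1 \<in> Pow S" for S1
  proof (cases "S1 = S")
    case True
    have "bco (ell p i) {} a a' = (if a' = a then 1 else (0::'k))"
      using A_co_small[OF a(2), of p "{}" a'] a(2) by (auto simp: ell_def prod_eq_iff)
    then show ?thesis using True by (simp add: t_def)
  next
    case False
    then have "S - S1 \<noteq> {}" using that by auto
    then have "bco (ell p i) (S - S1) a a' = (0::'k)"
      using A_co_small[OF a(2), of p "S - S1" a'] by (simp add: ell_def)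
    then show ?thesis using False by (simp add: t_def)
  qed
  have "(\<Sum>S1\<in>Pow S. t S1) = (\<Sum>S1\<in>Pow S. if S1 = S then bco M S x x' * (if a' = a then 1 else 0) else 0)"
    by (rule sum.cong) (use tc in auto)
  also have "\<dots> = bco M S x x' * (if a' = a then 1 else 0)"
    using S finite_subset by (simp add: sum.delta' finite_subset[OF S])
  finally show ?thesis using bt by simp
qed

lemma Wm_inj:
  assumes x: "x \<in> A_basis" and x': "x' \<in> A_basis" and w: "wt p x \<le> N" and w': "wt p x' \<le> N"
    and eq: "Wm p N r x = Wm p N r' x'"
  shows "x = x'" "r = r'"
proof -
  have e: "Wc x (r + (N - wt p x)) = Wc x' (r' + (N - wt p x'))" using eq by (simp add: Wm_Wc)
  show xx: "x = x'" using Wc_inj(1)[OF x x' e] .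
  show "r = r'" using Wc_inj(2)[OF x x' e] xx by simp
qed

lemma Wm_props:
  assumes x: "x \<in> A_basis" and w: "wt p x \<le> N"
  shows "Wm p N r x \<in> A_basis" "\<forall>n\<in>fst (Wm p N r x). 3 \<le> n" "wt p (Wm p N r x) = p * (r + N)"
    "A_deg p (Wm p N r x) = A_deg p x + qq p * int (r + N)"
proof -
  show "Wm p N r x \<in> A_basis" "\<forall>n\<in>fst (Wm p N r x). 3 \<le> n" using Wc_basis[OF x] by (simp_all add: Wm_Wc)
  have e: "r + (N - wt p x) + wt p x = r + N" using w by simp
  have "wt p (Wm p N r x) = p * (r + (N - wt p x)) + p * wt p x" unfolding Wm_Wc wt_Wc[OF x] ..
  also have "\<dots> = p * (r + (N - wt p x) + wt p x)" by (simp only: add_mult_distrib2)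
  also have "\<dots> = p * (r + N)" unfolding e ..
  finally show "wt p (Wm p N r x) = p * (r + N)" .
  show "A_deg p (Wm p N r x) = A_deg p x + qq p * int (r + N)"
    unfolding Wm_Wc A_deg_Wc[OF x] e ..
qed

lemma wt_insert2:
  assumes "finite T" "2 \<notin> T"
  shows "wt p (insert 2 T, e) = p ^ 2 + wt p (T, e)"
    "A_deg p (insert 2 T, e) = (2 * int p ^ 2 - 1) + A_deg p (T, e)"
  using assms by (simp_all add: wt_def A_deg_def)

lemma wt_minus2:
  assumes "2 \<notin> fst m"
  shows "wt p (fst m - {2}, snd m) = wt p m"
  using assms by simp



definition fmap :: "nat \<Rightarrow> nat \<Rightarrow> amon \<times> amon \<Rightarrow> amon" where
  "fmap p j b = Wm p (p * j) (snd (snd b) 1) (fst b)"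

definition psimap :: "nat \<Rightarrow> nat \<Rightarrow> nat \<times> amon \<Rightarrow> amon" where
  "psimap p j d = (insert 2 (fst (Wm p (p * (j - 1)) (fst d) (snd d))), snd (Wm p (p * (j - 1)) (fst d) (snd d)))"

lemma ell_basis: "basis (ell p n) = {m \<in> A_basis. wt p m \<le> p * n}"
  by (simp add: ell_def)

lemma Q_basis:
  assumes "1 \<le> j" "0 < p"
  shows "basis (Qquot p (p * j - 1)) = {m \<in> A_basis. wt p (fst m - {2}, snd m) < p * (p * j)}"
proof -
  have "p * j - 1 + 1 = p * j" using assms by (simp add: Suc_le_eq)
  then show ?thesis by (simp add: Qquot_def)
qed

lemma wt_rest:
  assumes m: "m \<in> A_basis" and m2: "2 \<in> fst m"
  shows "wt p m = p ^ 2 + wt p (fst m - {2}, snd m)" "(fst m - {2}, snd m) \<in> A_basis"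
    "\<forall>n\<in>fst m - {2}. 3 \<le> n" "A_deg p m = (2 * int p ^ 2 - 1) + A_deg p (fst m - {2}, snd m)"
proof -
  have f: "finite (fst m - {2})" using A_basisD(1)[OF m] by simp
  have e: "insert 2 (fst m - {2}) = fst m" using m2 by blast
  show "wt p m = p ^ 2 + wt p (fst m - {2}, snd m)"
    using wt_insert2(1)[OF f, of p "snd m"] unfolding e by simp
  show "A_deg p m = (2 * int p ^ 2 - 1) + A_deg p (fst m - {2}, snd m)"
    using wt_insert2(2)[OF f, of p "snd m"] unfolding e by simp
  show "(fst m - {2}, snd m) \<in> A_basis" using A_basisD[OF m] by (auto simp: A_basis_def)
  show "\<forall>n\<in>fst m - {2}. 3 \<le> n" using A_basisD(2)[OF m] by force
qed

lemma M1:
  assumes p: "2 \<le> p" and i: "i < p" and b: "b \<in> basis (ell p j) \<times> basis (ell p i)"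
  shows "fmap p j b \<in> basis (ell p (p * j + i))" "\<not> wt p (fst (fmap p j b) - {2}, snd (fmap p j b)) < p * (p * j)"
    "fmap p j b \<in> A_basis" "wt p (fmap p j b) = p * (snd (snd b) 1 + p * j)"
proof -
  obtain x a where xa: "b = (x, a)" by (cases b)
  have x: "x \<in> A_basis" "wt p x \<le> p * j" and a: "a \<in> A_basis" "wt p a \<le> p * i"
    using b xa by (auto simp: ell_basis)
  have k: "snd a 1 \<le> i" using small_ell(2)[OF a i p] .
  note W = Wm_props[OF x(1) x(2), of "snd a 1"]
  have fm: "fmap p j b = Wm p (p * j) (snd a 1) x" by (simp add: fmap_def xa)
  show "fmap p j b \<in> A_basis" using W(1) fm by simp
  have w: "wt p (fmap p j b) = p * (snd a 1 + p * j)" using W(3) fm by simp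
  then show "wt p (fmap p j b) = p * (snd (snd b) 1 + p * j)" using xa by simp
  have "p * (snd a 1 + p * j) \<le> p * (p * j + i)" using k by simp
  then show "fmap p j b \<in> basis (ell p (p * j + i))" using W(1) fm w by (simp add: ell_basis)
  have "2 \<notin> fst (fmap p j b)" using W(2) fm by force
  then have "wt p (fst (fmap p j b) - {2}, snd (fmap p j b)) = p * (snd a 1 + p * j)" using w by simp
  then show "\<not> wt p (fst (fmap p j b) - {2}, snd (fmap p j b)) < p * (p * j)" by simp
qed

lemma M2:
  assumes p: "2 \<le> p" and i: "i < p" and m: "m \<in> basis (ell p (p * j + i))"
    and nq: "\<not> wt p (fst m - {2}, snd m) < p * (p * j)"
  shows "\<exists>b\<in>basis (ell p j) \<times> basis (ell p i). m = fmap p j b"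
proof -
  have mA: "m \<in> A_basis" and wm: "wt p m \<le> p * (p * j + i)" using m by (auto simp: ell_basis)
  have pi: "p * i < p * p" using p i by simp
  have n2: "2 \<notin> fst m"
  proof
    assume m2: "2 \<in> fst m"
    have "wt p m = p * p + wt p (fst m - {2}, snd m)" using wt_rest(1)[OF mA m2] by (simp add: power2_eq_square)
    then have "p * p + p * (p * j) \<le> p * (p * j + i)" using nq wm by simp
    then show False using pi by (simp add: algebra_simps)
  qed
  have m3: "\<forall>n\<in>fst m. 3 \<le> n"
  proof
    fix n assume n: "n \<in> fst m"
    then have "2 \<le> n" "n \<noteq> 2" using A_basisD(2)[OF mA] n2 by auto
    then show "3 \<le> n" by simp
  qed
  have wq: "wt p m \<ge> p * (p * j)" using nq n2 by simp
  obtain s where s: "wt p m = p * s" using dvd_wt[OF mA, of p] by (auto elim: dvdE)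
  have s1: "s \<le> p * j + i" using wm s p by simp
  have s2: "p * j \<le> s" using wq s p by simp
  define k where "k = s - p * j"
  have ki: "k \<le> i" and sk: "s = p * j + k" using s1 s2 by (auto simp: k_def)
  have kp: "k < p" using ki i by simp
  obtain y where y: "y \<in> A_basis" "wt p y \<le> p * j" "m = Wm p (p * j) k y"
    using Wm_decomp[OF _ mA m3 _ kp, where a=j] p s sk by auto
  define a where "a = ({}::nat set, \<lambda>n::nat. if n = 1 then k else 0)"
  have a: "a \<in> basis (ell p i)" using single1_props ki by (simp add: a_def ell_basis mult.commute)
  have fm: "m = fmap p j (y, a)" using y by (simp add: fmap_def a_def)
  have ya: "(y, a) \<in> basis (ell p j) \<times> basis (ell p i)" using a y by (simp add: ell_basis)
  show ?thesis using ya fm by blast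
qed

lemma M3:
  assumes p: "2 \<le> p" and j: "1 \<le> j" and d: "d \<in> {i + 1..p - 1} \<times> basis (ell p (j - 1))"
  shows "psimap p j d \<in> A_basis" "wt p (fst (psimap p j d) - {2}, snd (psimap p j d)) < p * (p * j)"
    "\<not> wt p (psimap p j d) \<le> p * (p * j + i)"
    "A_deg p (psimap p j d) = 2 * int p ^ 2 - 1 + A_deg p (snd d) + qq p * int (fst d + p * (j - 1))"
proof -
  obtain k y where kyd: "d = (k, y)" by (cases d)
  have k: "i < k" "k < p" and y: "y \<in> A_basis" "wt p y \<le> p * (j - 1)"
    using d kyd p by (auto simp: ell_basis)
  define W where "W = Wm p (p * (j - 1)) k y"
  note Wp = Wm_props[OF y(1) y(2), of k, folded W_def]
  have ps: "psimap p j d = (insert 2 (fst W), snd W)" by (simp add: psimap_def kyd W_def)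
  have n2: "2 \<notin> fst W" using Wp(2) by force
  have fW: "finite (fst W)" using A_basisD(1)[OF Wp(1)] .
  show "psimap p j d \<in> A_basis" using A_basisD[OF Wp(1)] ps by (auto simp: A_basis_def)
  have "insert 2 (fst W) - {2} = fst W" using n2 by simp
  then have r: "(fst (psimap p j d) - {2}, snd (psimap p j d)) = W" using ps by simp
  have "k + p * (j - 1) < p * j"
  proof -
    have "p * (j - 1) + p = p * j" using j by (cases j) auto
    then show ?thesis using k by simp
  qed
  then have "p * (k + p * (j - 1)) < p * (p * j)" using p by simp
  then show "wt p (fst (psimap p j d) - {2}, snd (psimap p j d)) < p * (p * j)" using r Wp(3) by simp
  have wb: "wt p (psimap p j d) = p ^ 2 + p * (k + p * (j - 1))" using wt_insert2(1)[OF fW n2] Wp(3) ps by simp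
  have "p * (p * j + i) < p ^ 2 + p * (k + p * (j - 1))"
  proof -
    obtain j' where j': "j = Suc j'" using j by (cases j) auto
    have "p ^ 2 + p * (k + p * (j - 1)) = p * (p * j + k)" unfolding j' by (simp add: power2_eq_square algebra_simps)
    moreover have "p * (p * j + i) < p * (p * j + k)" using k p by simp
    ultimately show ?thesis by simp
  qed
  then show "\<not> wt p (psimap p j d) \<le> p * (p * j + i)" using wb by simp
  show "A_deg p (psimap p j d) = 2 * int p ^ 2 - 1 + A_deg p (snd d) + qq p * int (fst d + p * (j - 1))"
    using wt_insert2(2)[OF fW n2] Wp(4) ps kyd by simp
qed

lemma M4:
  assumes p: "2 \<le> p" and j: "1 \<le> j" and i: "i < p" and bA: "b \<in> A_basis"
    and bq: "wt p (fst b - {2}, snd b) < p * (p * j)" and bl: "\<not> wt p b \<le> p * (p * j + i)"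
  shows "\<exists>d\<in>{i + 1..p - 1} \<times> basis (ell p (j - 1)). b = psimap p j d"
proof -
  obtain j' where j': "j = Suc j'" using j by (cases j) auto
  have b2: "2 \<in> fst b"
  proof (rule ccontr)
    assume "2 \<notin> fst b"
    then have "wt p b < p * (p * j)" using bq by simp
    moreover have "p * (p * j) \<le> p * (p * j + i)" by simp
    ultimately show False using bl by linarith
  qed
  note R = wt_rest[OF bA b2]
  define m where "m = (fst b - {2}, snd b)"
  obtain s where s: "wt p m = p * s" using dvd_wt[OF R(2), of p] by (auto simp: m_def elim: dvdE)
  have s1: "s < p * j" using bq s p by (simp add: m_def)
  have "p * (p * j + i) < p * p + p * s" using bl R(1) s by (simp add: m_def power2_eq_square)
  then have "p * (p * j + i) < p * (p + s)" by (simp add: algebra_simps)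
  then have s2: "p * j + i < p + s" using p by simp
  define k where "k = s - p * j'"
  have pj: "p * j = p * j' + p" using j' by simp
  have ks: "s = p * j' + k" and ki: "i < k" and kp: "k < p" using s1 s2 pj by (auto simp: k_def)
  have mA: "m \<in> A_basis" and m3: "\<forall>n\<in>fst m. 3 \<le> n" using R(2,3) by (simp_all add: m_def)
  obtain y where y: "y \<in> A_basis" "wt p y \<le> p * j'" "m = Wm p (p * j') k y"
    using Wm_decomp[OF _ mA m3 _ kp, where a=j'] p s ks by auto
  have "b = psimap p j (k, y)"
  proof -
    have fe: "fst b = insert 2 (fst m)" using b2 by (auto simp: m_def)
    have se: "snd b = snd m" by (simp add: m_def)
    have "fst (Wm p (p * (j - 1)) k y) = fst m" "snd (Wm p (p * (j - 1)) k y) = snd m"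
      using y(3) j' by simp_all
    then show ?thesis using fe se by (simp add: psimap_def prod_eq_iff)
  qed
  moreover have "(k, y) \<in> {i + 1..p - 1} \<times> basis (ell p (j - 1))" using ki kp y j' by (auto simp: ell_basis)
  ultimately show ?thesis by blast
qed



lemma rec_simps:
  "basis (susp n M) = basis M" "bdeg (susp n M) b = bdeg M b + n" "bco (susp n M) = bco M"
  "basis (tensor p M1 M2) = basis M1 \<times> basis M2"
  "bdeg (tensor p M1 M2) (x, a) = bdeg M1 x + bdeg M2 a"
  "basis (dsum_susp K f M) = K \<times> basis M" "bdeg (dsum_susp K f M) (k, y) = f k + bdeg M y"
  "bco (dsum_susp K f M) S (k, y) (k', c) = (if k = k' then bco M S y c else 0)"
  "bdeg (ell p n') = A_deg p" "bco (ell p n') = A_co p"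
  "bdeg (Qquot p r) = A_deg p"
  by (simp_all add: susp_def tensor_def dsum_susp_def ell_def Qquot_def)

definition LB :: "nat \<Rightarrow> nat \<Rightarrow> amon set" where
  "LB p n = {m \<in> A_basis. wt p m \<le> p * n}"

lemma basis_ell_LB: "basis (ell p n) = LB p n"
  by (simp add: ell_def LB_def)

lemma AS_sub:
  assumes p: "0 < p" and x: "x \<in> A_basis" and S: "S \<subseteq> {0,1,2}"
    and nz: "A_co p S x c \<noteq> (0::'k::field)"
  shows "fst c \<subseteq> fst x"
proof
  fix n assume n: "n \<in> fst c"
  have nz': "alpha_A p x (S \<union> (\<lambda>n. n + 3) ` fst c, snd c) \<noteq> (0::'k)" using nz by (simp add: A_co_def)
  have "n + 3 \<in> fst (S \<union> (\<lambda>n. n + 3) ` fst c, snd c)" using n by simp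
  then have "n + 3 \<in> {0,1,2} \<union> (\<lambda>n. n + 3) ` fst x" using supp_alpha(1)[OF p x nz'] by blast
  then show "n \<in> fst x" by auto
qed

lemma Wm_diff_zero:
  assumes p: "0 < p" and x: "x \<in> A_basis" and x': "x' \<in> A_basis" and w: "wt p x \<le> N" and w': "wt p x' \<le> N"
    and S: "S \<subseteq> {0,1,2}" and k: "k \<noteq> k'"
  shows "A_co p S (Wm p N k x) (Wm p N k' x') = (0::'k::field)"
proof (rule ccontr)
  assume "A_co p S (Wm p N k x) (Wm p N k' x') \<noteq> (0::'k)"
  from AT2[OF p x w S this] obtain x'' where x'': "x'' \<in> A_basis" "wt p x'' \<le> wt p x" "Wm p N k' x' = Wm p N k x''"
    by blast
  have "k' = k" using Wm_inj(2)[OF x' x''(1) w' _ x''(3)] x''(2) w by simp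
  then show False using k by simp
qed

lemma f_cond:
  assumes p: "2 \<le> p" and i: "i < p" and S: "S \<subseteq> {0,1,2}"
    and b: "b \<in> LB p j \<times> LB p i"
  shows "A_co p S (fmap p j b) c = (if c \<in> fmap p j ` (LB p j \<times> LB p i)
      then bco (tensor p (ell p j) (ell p i)) S b (inv_into (LB p j \<times> LB p i) (fmap p j) c)
      else (0::'k::field))"
proof -
  let ?B = "LB p j \<times> LB p i"
  have p0: "0 < p" using p by simp
  obtain x a where xa: "b = (x, a)" by (cases b)
  have x: "x \<in> A_basis" "wt p x \<le> p * j" and a: "a \<in> A_basis" "wt p a \<le> p * i"
    using b xa by (auto simp: LB_def)
  have ar: "a = ({}, \<lambda>n. if n = 1 then snd a 1 else 0)" using small_ell(1)[OF a i p] .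
  have fa: "fst a = {}" using ar by (metis fst_conv)
  have fm: "fmap p j b = Wm p (p * j) (snd a 1) x" by (simp add: fmap_def xa)
  have injB: "inj_on (fmap p j) ?B"
  proof
    fix b1 b2 assume b1: "b1 \<in> ?B" and b2: "b2 \<in> ?B" and eq: "fmap p j b1 = fmap p j b2"
    obtain x1 a1 x2 a2 where e: "b1 = (x1, a1)" "b2 = (x2, a2)" by (cases b1, cases b2)
    have x1: "x1 \<in> A_basis" "wt p x1 \<le> p * j" "a1 \<in> A_basis" "wt p a1 \<le> p * i"
      using b1 e by (auto simp: LB_def)
    have x2: "x2 \<in> A_basis" "wt p x2 \<le> p * j" "a2 \<in> A_basis" "wt p a2 \<le> p * i"
      using b2 e by (auto simp: LB_def)
    have eq': "Wm p (p * j) (snd a1 1) x1 = Wm p (p * j) (snd a2 1) x2" using eq e by (simp add: fmap_def)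
    have "x1 = x2" using Wm_inj(1)[OF x1(1) x2(1) x1(2) x2(2) eq'] .
    moreover have "snd a1 1 = snd a2 1" using Wm_inj(2)[OF x1(1) x2(1) x1(2) x2(2) eq'] .
    then have "a1 = a2" using small_ell(1)[OF x1(3) x1(4) i p] small_ell(1)[OF x2(3) x2(4) i p] by metis
    ultimately show "b1 = b2" using e by simp
  qed
  show ?thesis
  proof (cases "c \<in> fmap p j ` ?B")
    case True
    then obtain b' where b': "b' \<in> ?B" "c = fmap p j b'" by blast
    have inv: "inv_into ?B (fmap p j) c = b'" using b' inv_into_f_f[OF injB] by simp
    obtain x' a' where xa': "b' = (x', a')" by (cases b')
    have x': "x' \<in> A_basis" "wt p x' \<le> p * j" and a': "a' \<in> A_basis" "wt p a' \<le> p * i"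
      using b' xa' by (auto simp: LB_def)
    have fm': "c = Wm p (p * j) (snd a' 1) x'" using b' xa' by (simp add: fmap_def)
    have tb: "bco (tensor p (ell p j) (ell p i)) S (x, a) (x', a') = A_co p S x x' * (if a' = a then 1 else (0::'k))"
      using tensor_bco[OF a(1) fa S, of p "ell p j" i x x' a'] by (simp add: ell_def)
    show ?thesis
    proof (cases "a' = a")
      case True
      have "A_co p S (fmap p j b) c = A_co p S x x'"
        using AT1[OF p0 x(1) x'(1) x(2) x'(2) S] fm fm' True by simp
      then show ?thesis using True tb inv xa xa' b' by simp
    next
      case False
      have "snd a 1 \<noteq> snd a' 1"
        using False small_ell(1)[OF a i p] small_ell(1)[OF a' i p] by metis
      then have "A_co p S (fmap p j b) c = (0::'k)"
        using Wm_diff_zero[OF p0 x(1) x'(1) x(2) x'(2) S] fm fm' by simp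
      then show ?thesis using False tb inv xa xa' b' by simp
    qed
  next
    case False
    have "A_co p S (fmap p j b) c = (0::'k)"
    proof (rule ccontr)
      assume "A_co p S (fmap p j b) c \<noteq> (0::'k)"
      then have "A_co p S (Wm p (p * j) (snd a 1) x) c \<noteq> (0::'k)" using fm by simp
      from AT2[OF p0 x(1) x(2) S this] obtain x'' where
        x'': "x'' \<in> A_basis" "wt p x'' \<le> wt p x" "c = Wm p (p * j) (snd a 1) x''" by blast
      have "(x'', a) \<in> ?B" using x'' x a by (auto simp: LB_def)
      moreover have "c = fmap p j (x'', a)" using x''(3) by (simp add: fmap_def)
      ultimately show False using False by blast
    qed
    then show ?thesis using False by simp
  qed
qed



definition QB :: "nat \<Rightarrow> nat \<Rightarrow> amon set" where
  "QB p j = {m \<in> A_basis. wt p (fst m - {2}, snd m) < p * (p * j)}"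

definition DB :: "nat \<Rightarrow> nat \<Rightarrow> nat \<Rightarrow> (nat \<times> amon) set" where
  "DB p j i = {i + 1..p - 1} \<times> LB p (j - 1)"

definition sig :: "nat \<times> amon \<Rightarrow> 'k::field" where
  "sig d = (-1) ^ card (fst (snd d))"

lemma Ksplit:
  assumes p: "0 < p" and b: "b \<in> A_basis" and b2: "2 \<in> fst b" and S: "S \<subseteq> {0,1,2}"
    and W3: "\<forall>n\<in>fst W. 3 \<le> n"
  shows "A_co p S b (insert 2 (fst W), snd W) = (-1) ^ card S * (A_co p S (fst b - {2}, snd b) W :: 'k::field)"
proof -
  let ?U = "S \<union> (\<lambda>n. n + 3) ` fst W"
  have U5: "5 \<notin> ?U" using S W3 by force
  have e: "S \<union> (\<lambda>n. n + 3) ` insert 2 (fst W) = insert 5 ?U" by auto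
  have c: "{c\<in>?U. c < 5} = S" using S W3 by force
  show ?thesis
    unfolding A_co_def fst_conv snd_conv e alpha_split2[OF p b b2 U5] c ..
qed

lemma Kzero:
  assumes p: "0 < p" and b: "b \<in> A_basis" and b2: "2 \<notin> fst b" and S: "S \<subseteq> {0,1,2}" and c2: "2 \<in> fst c"
  shows "A_co p S b c = (0::'k::field)"
  using AS_sub[OF p b S, of c] b2 c2 by blast

lemma psimap_inj:
  assumes j: "1 \<le> j"
  shows "inj_on (psimap p j) (DB p j i)"
proof
  fix d1 d2 assume d1: "d1 \<in> DB p j i" and d2: "d2 \<in> DB p j i" and eq: "psimap p j d1 = psimap p j d2"
  obtain k1 y1 k2 y2 where e: "d1 = (k1, y1)" "d2 = (k2, y2)" by (cases d1, cases d2)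
  have y1: "y1 \<in> A_basis" "wt p y1 \<le> p * (j - 1)" using d1 e by (auto simp: DB_def LB_def)
  have y2: "y2 \<in> A_basis" "wt p y2 \<le> p * (j - 1)" using d2 e by (auto simp: DB_def LB_def)
  let ?W1 = "Wm p (p * (j - 1)) k1 y1" and ?W2 = "Wm p (p * (j - 1)) k2 y2"
  have n1: "2 \<notin> fst ?W1" using Wm_props(2)[OF y1, of k1] by force
  have n2: "2 \<notin> fst ?W2" using Wm_props(2)[OF y2, of k2] by force
  have "insert 2 (fst ?W1) = insert 2 (fst ?W2)" "snd ?W1 = snd ?W2" using eq e by (simp_all add: psimap_def)
  then have "fst ?W1 = fst ?W2" "snd ?W1 = snd ?W2" using n1 n2 by (metis insert_ident, simp)
  then have W: "?W1 = ?W2" by (simp add: prod_eq_iff)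
  show "d1 = d2" using Wm_inj[OF y1(1) y2(1) y1(2) y2(2) W] e by simp
qed

lemma psimap_W:
  assumes "d \<in> DB p j i"
  shows "fst (psimap p j d) - {2} = fst (Wm p (p * (j - 1)) (fst d) (snd d))"
    "2 \<in> fst (psimap p j d)"
    "(fst (psimap p j d) - {2}, snd (psimap p j d)) = Wm p (p * (j - 1)) (fst d) (snd d)"
proof -
  have y: "snd d \<in> A_basis" "wt p (snd d) \<le> p * (j - 1)" using assms by (auto simp: DB_def LB_def)
  have n: "2 \<notin> fst (Wm p (p * (j - 1)) (fst d) (snd d))" using Wm_props(2)[OF y, of "fst d"] by force
  show "fst (psimap p j d) - {2} = fst (Wm p (p * (j - 1)) (fst d) (snd d))" using n by (simp add: psimap_def)
  then show "(fst (psimap p j d) - {2}, snd (psimap p j d)) = Wm p (p * (j - 1)) (fst d) (snd d)"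
    by (simp add: psimap_def prod_eq_iff)
  show "2 \<in> fst (psimap p j d)" by (simp add: psimap_def)
qed

lemma h_cond:
  assumes p: "2 \<le> p" and j: "1 \<le> j" and i: "i < p" and S: "S \<subseteq> {0,1,2}"
    and b: "b \<in> QB p j" and d: "d \<in> DB p j i"
  shows "sig d * A_co p S b (psimap p j d) = (if b \<in> psimap p j ` DB p j i
     then sig (inv_into (DB p j i) (psimap p j) b) *
       (if fst (inv_into (DB p j i) (psimap p j) b) = fst d then A_co p S (snd (inv_into (DB p j i) (psimap p j) b)) (snd d) else 0)
     else (0::'k::field))"
proof -
  have p0: "0 < p" using p by simp
  let ?N = "p * (j - 1)"
  obtain k y' where d': "d = (k, y')" by (cases d)
  have y': "y' \<in> A_basis" "wt p y' \<le> ?N" and k: "i < k" "k < p" using d d' p by (auto simp: DB_def LB_def)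
  let ?W' = "Wm p ?N k y'"
  note W'p = Wm_props[OF y', of k]
  have bA: "b \<in> A_basis" and bq: "wt p (fst b - {2}, snd b) < p * (p * j)" using b by (auto simp: QB_def)
  have psd: "psimap p j d = (insert 2 (fst ?W'), snd ?W')" by (simp add: psimap_def d')
  have split: "A_co p S b (psimap p j d) = (-1) ^ card S * (A_co p S (fst b - {2}, snd b) ?W' :: 'k)"
    if b2: "2 \<in> fst b" using Ksplit[OF p0 bA b2 S W'p(2)] psd by simp
  show ?thesis
  proof (cases "b \<in> psimap p j ` DB p j i")
    case True
    then obtain d2 where d2: "d2 \<in> DB p j i" "b = psimap p j d2" by blast
    have inv: "inv_into (DB p j i) (psimap p j) b = d2" using d2 inv_into_f_f[OF psimap_inj[OF j]] by simp
    obtain k2 y where d2': "d2 = (k2, y)" by (cases d2)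
    have y: "y \<in> A_basis" "wt p y \<le> ?N" using d2 d2' by (auto simp: DB_def LB_def)
    have b2: "2 \<in> fst b" using psimap_W(2)[OF d2(1)] d2(2) by simp
    have m: "(fst b - {2}, snd b) = Wm p ?N k2 y" using psimap_W(3)[OF d2(1)] d2 d2' by simp
    have L: "A_co p S b (psimap p j d) = (-1) ^ card S * (A_co p S (Wm p ?N k2 y) ?W' :: 'k)"
      using split[OF b2] m by simp
    show ?thesis
    proof (cases "k2 = k")
      case True
      have A: "A_co p S (Wm p ?N k2 y) ?W' = (A_co p S y y' :: 'k)"
        using AT1[OF p0 y(1) y'(1) y(2) y'(2) S] True by simp
      have sg: "sig d * (-1) ^ card S = (sig d2 :: 'k)" if nz: "A_co p S y y' \<noteq> (0::'k)"
      proof -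
        have "card (fst y) = card S + card (fst y')" using AS(3)[OF p0 y(1) S nz] .
        then show ?thesis by (simp add: sig_def d' d2' power_add)
      qed
      have "sig d * A_co p S b (psimap p j d) = sig d2 * (A_co p S y y' :: 'k)"
      proof (cases "A_co p S y y' = (0::'k)")
        case True then show ?thesis using L A by simp
      next
        case False
        have "sig d * A_co p S b (psimap p j d) = (sig d * (-1) ^ card S) * (A_co p S y y' :: 'k)"
          using L A by simp
        then show ?thesis using sg[OF False] by simp
      qed
      then show ?thesis using \<open>b \<in> psimap p j ` DB p j i\<close> inv d' d2' True by simp
    next
      case False
      have "A_co p S (Wm p ?N k2 y) ?W' = (0::'k)" using Wm_diff_zero[OF p0 y(1) y'(1) y(2) y'(2) S False] .
      then show ?thesis using L \<open>b \<in> psimap p j ` DB p j i\<close> inv d' d2' False by simp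
    qed
  next
    case False
    have "A_co p S b (psimap p j d) = (0::'k)"
    proof (rule ccontr)
      assume nz: "A_co p S b (psimap p j d) \<noteq> (0::'k)"
      have b2: "2 \<in> fst b"
      proof (rule ccontr)
        assume nb: "2 \<notin> fst b"
        have c2: "2 \<in> fst (psimap p j d)" by (simp add: psd)
        have "A_co p S b (psimap p j d) = (0::'k)" by (rule Kzero[OF p0 bA nb S c2])
        then show False using nz by simp
      qed
      note R = wt_rest[OF bA b2]
      have nz2: "A_co p S (fst b - {2}, snd b) ?W' \<noteq> (0::'k)" using nz split[OF b2] by simp
      have w1: "wt p ?W' \<le> wt p (fst b - {2}, snd b)" using AS(2)[OF p0 R(2) S nz2] .
      have "wt p (fst (fst b - {2}, snd b) - {2}, snd (fst b - {2}, snd b)) \<le> wt p (fst ?W' - {2}, snd ?W')"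
        using AS(4)[OF p0 R(2) S nz2] .
      moreover have "2 \<notin> fst ?W'" using W'p(2) by force
      ultimately have w2: "wt p (fst b - {2}, snd b) \<le> wt p ?W'" by simp
      have wb: "wt p b = wt p (psimap p j d)"
      proof -
        have fW: "finite (fst ?W')" using A_basisD(1)[OF W'p(1)] .
        have "wt p (psimap p j d) = p ^ 2 + wt p ?W'"
          using wt_insert2(1)[OF fW \<open>2 \<notin> fst ?W'\<close>, of p "snd ?W'"] psd by simp
        then show ?thesis using R(1) w1 w2 by simp
      qed
      have d'': "d \<in> {i + 1..p - 1} \<times> basis (ell p (j - 1))" using d by (simp add: DB_def basis_ell_LB)
      have "\<not> wt p b \<le> p * (p * j + i)" using M3(3)[OF p j d''] wb by simp
      from M4[OF p j i bA bq this] obtain d3 where "d3 \<in> DB p j i" "b = psimap p j d3"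
        by (auto simp: DB_def basis_ell_LB)
      then show False using False by blast
    qed
    then show ?thesis using False by simp
  qed
qed



lemma dsum_bco: "bco (dsum_susp K f M) S u v = (if fst u = fst v then bco M S (snd u) (snd v) else 0)"
  by (cases u, cases v) (simp add: dsum_susp_def)

lemma fmap_inj:
  assumes p: "2 \<le> p" and i: "i < p"
  shows "inj_on (fmap p j) (LB p j \<times> LB p i)"
proof
  fix b1 b2 assume b1: "b1 \<in> LB p j \<times> LB p i" and b2: "b2 \<in> LB p j \<times> LB p i" and eq: "fmap p j b1 = fmap p j b2"
  obtain x1 a1 x2 a2 where e: "b1 = (x1, a1)" "b2 = (x2, a2)" by (cases b1, cases b2)
  have x1: "x1 \<in> A_basis" "wt p x1 \<le> p * j" "a1 \<in> A_basis" "wt p a1 \<le> p * i"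
    using b1 e by (auto simp: LB_def)
  have x2: "x2 \<in> A_basis" "wt p x2 \<le> p * j" "a2 \<in> A_basis" "wt p a2 \<le> p * i"
    using b2 e by (auto simp: LB_def)
  have eq': "Wm p (p * j) (snd a1 1) x1 = Wm p (p * j) (snd a2 1) x2" using eq e by (simp add: fmap_def)
  have "x1 = x2" using Wm_inj(1)[OF x1(1) x2(1) x1(2) x2(2) eq'] .
  moreover have "snd a1 1 = snd a2 1" using Wm_inj(2)[OF x1(1) x2(1) x1(2) x2(2) eq'] .
  then have "a1 = a2" using small_ell(1)[OF x1(3) x1(4) i p] small_ell(1)[OF x2(3) x2(4) i p] by metis
  ultimately show "b1 = b2" using e by simp
qed

lemma fmap_deg:
  assumes p: "2 \<le> p" and i: "i < p" and b: "b \<in> LB p j \<times> LB p i"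
  shows "A_deg p (fmap p j b) = A_deg p (fst b) + A_deg p (snd b) + qq p * int p * int j"
proof -
  obtain x a where xa: "b = (x, a)" by (cases b)
  have x: "x \<in> A_basis" "wt p x \<le> p * j" and a: "a \<in> A_basis" "wt p a \<le> p * i"
    using b xa by (auto simp: LB_def)
  have ar: "a = ({}, \<lambda>n. if n = 1 then snd a 1 else 0)" using small_ell(1)[OF a i p] .
  have da: "A_deg p a = qq p * int (snd a 1)" using single1_props(3)[of p "snd a 1"] ar by metis
  have "A_deg p (fmap p j b) = A_deg p x + qq p * int (snd a 1 + p * j)"
    using Wm_props(4)[OF x, of "snd a 1"] by (simp add: fmap_def xa)
  then show ?thesis using da xa by (simp add: algebra_simps)
qed

lemma Qquot_bco: "bco (Qquot p r) S d' d = (if d \<in> A_basis \<and> wt p (fst d - {2}, snd d) < p * (r + 1) then A_co p S d' d else 0)"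
  by (simp add: Qquot_def)

lemma comod_vecs:
  assumes "comod_map M N f" "v \<in> vecs M"
  shows "f v \<in> vecs N"
proof -
  have "\<forall>v\<in>vecs M. f v \<in> vecs N" using assms(1) unfolding comod_map_def by (rule conjunct1)
  then show ?thesis using assms(2) by (rule bspec)
qed

theorem mainTheorem17:
  fixes p j i :: nat
  assumes "prime p" and "odd p" and "card (UNIV :: 'k set) = p"
    and "1 \<le> j" and "i < p"
  shows "\<exists>f g h. exact4
           (susp (qq p * int p * int j) (tensor p (ell p j :: (amon, 'k::{field,finite}) bcomod) (ell p i)))
           (ell p (p * j + i))
           (Qquot p (p * j - 1))
           (dsum_susp {i + 1..p - 1} (phi p j) (ell p (j - 1) :: (amon, 'k) bcomod))
           f g h"
proof -
  have p: "2 \<le> p" using assms(1) by (simp add: prime_ge_2_nat)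
  have p0: "0 < p" using p by simp
  have j: "1 \<le> j" and i: "i < p" using assms by auto
  define M1 where "M1 = susp (qq p * int p * int j) (tensor p (ell p j :: (amon, 'k) bcomod) (ell p i))"
  define M2 where "M2 = (ell p (p * j + i) :: (amon, 'k) bcomod)"
  define M3 where "M3 = (Qquot p (p * j - 1) :: (amon, 'k) bcomod)"
  define M4 where "M4 = dsum_susp {i + 1..p - 1} (phi p j) (ell p (j - 1) :: (amon, 'k) bcomod)"
  have B1: "basis M1 = LB p j \<times> LB p i" by (simp add: M1_def rec_simps basis_ell_LB)
  have B2: "basis M2 = LB p (p * j + i)" by (simp add: M2_def basis_ell_LB)
  have B3: "basis M3 = QB p j" using Q_basis[OF j p0] by (simp add: M3_def QB_def)
  have B4: "basis M4 = DB p j i" by (simp add: M4_def rec_simps basis_ell_LB DB_def)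
  have pj1: "p * j - 1 + 1 = p * j" using j p0 by (simp add: Suc_le_eq)
  have q3: "bco M3 S b d = (if d \<in> QB p j then A_co p S b d else 0)" for S b d
    unfolding M3_def Qquot_bco pj1 QB_def by simp
  have co3: "bco M3 S b d = A_co p S b d" if "d \<in> QB p j" for S b d
    using that q3 by simp
  define f :: "(amon \<times> amon \<Rightarrow> 'k) \<Rightarrow> (amon \<Rightarrow> 'k)" where "f = push (fmap p j) (basis M1)"
  define g :: "(amon \<Rightarrow> 'k) \<Rightarrow> (amon \<Rightarrow> 'k)" where "g = pull id (basis M3) (\<lambda>_. 1)"
  define h :: "(amon \<Rightarrow> 'k) \<Rightarrow> (nat \<times> amon \<Rightarrow> 'k)" where "h = pull (psimap p j) (basis M4) sig"
  have cf: "comod_map M1 M2 f"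
    unfolding f_def
  proof (rule push_comod)
    show "inj_on (fmap p j) (basis M1)" using fmap_inj[OF p i] B1 by simp
    show "fmap p j ` basis M1 \<subseteq> basis M2" using M1(1)[OF p i] B1 B2 by (auto simp: basis_ell_LB)
    show "\<forall>b\<in>basis M1. bdeg M2 (fmap p j b) = bdeg M1 b"
    proof
      fix b assume b: "b \<in> basis M1"
      obtain x a where xa: "b = (x, a)" by (cases b)
      show "bdeg M2 (fmap p j b) = bdeg M1 b"
        using fmap_deg[OF p i, of b j] b B1 xa by (simp add: M1_def M2_def rec_simps basis_ell_LB)
    qed
    fix S :: "nat set" and b c assume S: "S \<subseteq> {0,1,2}" and b: "b \<in> basis M1"
    have bL: "b \<in> LB p j \<times> LB p i" using b B1 by simp
    have fc: "A_co p S (fmap p j b) c = (if c \<in> fmap p j ` (LB p j \<times> LB p i)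
      then bco (tensor p (ell p j :: (amon, 'k) bcomod) (ell p i)) S b (inv_into (LB p j \<times> LB p i) (fmap p j) c)
      else (0::'k))" by (rule f_cond[OF p i S bL])
    show "bco M2 S (fmap p j b) c = (if c \<in> fmap p j ` basis M1 then bco M1 S b (inv_into (basis M1) (fmap p j) c) else 0)"
      unfolding B1 using fc by (simp add: M1_def M2_def rec_simps)
  qed
  have cg: "comod_map M2 M3 g"
    unfolding g_def
  proof (rule pull_comod)
    show "inj_on id (basis M3)" by simp
    show "\<forall>d\<in>basis M3. bdeg M2 (id d) = bdeg M3 d" by (simp add: M2_def M3_def rec_simps)
    show "\<And>d. (1::'k) \<noteq> 0" by simp
    fix S :: "nat set" assume S: "S \<subseteq> {0,1,2}"
    {
      fix b d assume b: "b \<in> basis M2" and d: "d \<in> basis M3"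
      have dq: "d \<in> QB p j" using d B3 by simp
      have bA: "b \<in> A_basis" using b B2 by (simp add: LB_def)
      show "1 * bco M2 S b (id d) = (if b \<in> id ` basis M3 then 1 * bco M3 S (inv_into (basis M3) id b) d else 0)"
      proof (cases "b \<in> basis M3")
        case True
        have "inv_into (basis M3) id b = b" using inv_into_f_f[of id "basis M3" b] True by simp
        then show ?thesis using co3[OF dq] True by (simp add: M2_def rec_simps)
      next
        case False
        have "A_co p S b d = (0::'k)"
        proof (rule ccontr)
          assume nz: "A_co p S b d \<noteq> (0::'k)"
          have "wt p (fst b - {2}, snd b) \<le> wt p (fst d - {2}, snd d)" using AS(4)[OF p0 bA S nz] .
          then have "b \<in> QB p j" using dq bA by (simp add: QB_def)
          then show False using False B3 by simp
        qed
        then show ?thesis using False by (simp add: M2_def rec_simps)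
      qed
    }
    {
      fix d' d assume "d' \<in> basis M3" "d \<notin> basis M3"
      then show "bco M3 S d' d = 0" using B3 q3 by simp
    }
  qed
  have ch: "comod_map M3 M4 h"
    unfolding h_def
  proof (rule pull_comod)
    show "inj_on (psimap p j) (basis M4)" using psimap_inj[OF j] B4 by simp
    show "\<forall>d\<in>basis M4. bdeg M3 (psimap p j d) = bdeg M4 d"
    proof
      fix d assume d: "d \<in> basis M4"
      obtain k y where ky: "d = (k, y)" by (cases d)
      have d': "d \<in> {i + 1..p - 1} \<times> basis (ell p (j - 1))" using d B4 by (simp add: DB_def basis_ell_LB)
      have e: "int (k + p * (j - 1)) = int p * (int j - 1) + int k" using j by (cases j) (simp_all add: algebra_simps)
      have A: "A_deg p (psimap p j d) = 2 * int p ^ 2 - 1 + A_deg p (snd d) + qq p * int (fst d + p * (j - 1))"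
        by (rule M3(4)[OF p j d'])
      have A': "A_deg p (psimap p j (k, y)) = 2 * int p ^ 2 - 1 + A_deg p y + qq p * (int p * (int j - 1) + int k)"
        using A unfolding ky fst_conv snd_conv e .
      show "bdeg M3 (psimap p j d) = bdeg M4 d"
        unfolding ky by (simp add: M3_def M4_def rec_simps phi_def A')
    qed
    show "\<And>d. sig d \<noteq> (0::'k)" by (simp add: sig_def)
    fix S :: "nat set" assume S: "S \<subseteq> {0,1,2}"
    {
      fix b d assume b: "b \<in> basis M3" and d: "d \<in> basis M4"
      have bq: "b \<in> QB p j" using b B3 by simp
      have dd: "d \<in> DB p j i" using d B4 by simp
      have d': "d \<in> {i + 1..p - 1} \<times> basis (ell p (j - 1))" using d B4 by (simp add: DB_def basis_ell_LB)
      have pq: "psimap p j d \<in> QB p j" using M3(1,2)[OF p j d'] by (simp add: QB_def)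
      show "sig d * bco M3 S b (psimap p j d) = (if b \<in> psimap p j ` basis M4
          then sig (inv_into (basis M4) (psimap p j) b) * bco M4 S (inv_into (basis M4) (psimap p j) b) d else 0)"
      proof -
        have hc: "sig d * A_co p S b (psimap p j d) = (if b \<in> psimap p j ` DB p j i
           then sig (inv_into (DB p j i) (psimap p j) b) *
             (if fst (inv_into (DB p j i) (psimap p j) b) = fst d then A_co p S (snd (inv_into (DB p j i) (psimap p j) b)) (snd d) else 0)
           else (0::'k))" by (rule h_cond[OF p j i S bq dd])
        show ?thesis unfolding B4 co3[OF pq] hc by (simp add: M4_def dsum_bco rec_simps)
      qed
    }
    {
      fix d' d assume d': "d' \<in> basis M4" and d: "d \<notin> basis M4"
      obtain k' y'' where e': "d' = (k', y'')" by (cases d')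
      obtain k c where e: "d = (k, c)" by (cases d)
      have d'D: "(k', y'') \<in> DB p j i" using d' B4 e' by simp
      have y: "y'' \<in> A_basis" "wt p y'' \<le> p * (j - 1)" and k': "k' \<in> {i + 1..p - 1}"
        using d'D by (simp_all add: DB_def LB_def)
      have dD: "(k, c) \<notin> DB p j i" using d B4 e by simp
      have bc: "bco M4 S d' d = (if k' = k then A_co p S y'' c else 0)"
        unfolding e e' M4_def rec_simps ..
      show "bco M4 S d' d = 0"
      proof (cases "k' = k")
        case False then show ?thesis using bc by simp
      next
        case True
        have nd: "c \<notin> LB p (j - 1)" using dD k' True by (simp add: DB_def)
        have "A_co p S y'' c = (0::'k)"
        proof (rule ccontr)
          assume nz: "A_co p S y'' c \<noteq> (0::'k)"
          have "c \<in> A_basis" "wt p c \<le> wt p y''" using AS(1,2)[OF p0 y(1) S nz] by auto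
          then have "c \<in> LB p (j - 1)" using y by (simp add: LB_def)
          then show False using nd by simp
        qed
        then show ?thesis using bc True by simp
      qed
    }
  qed
  have injf: "inj_on f (vecs M1)"
  proof
    fix v1 v2 assume v1: "v1 \<in> vecs M1" and v2: "v2 \<in> vecs M1" and eq: "f v1 = f v2"
    show "v1 = v2"
    proof
      fix b show "v1 b = v2 b"
      proof (cases "b \<in> basis M1")
        case True
        have injB: "inj_on (fmap p j) (basis M1)" using fmap_inj[OF p i] B1 by simp
        have "f v1 (fmap p j b) = v1 b" "f v2 (fmap p j b) = v2 b"
          using push_at[OF injB True] by (simp_all add: f_def)
        then show ?thesis using eq by metis
      next
        case False then show ?thesis using vecsD(3)[OF v1] vecsD(3)[OF v2] by simp
      qed
    qed
  qed
  have gf: "f ` vecs M1 = {w \<in> vecs M2. g w = (\<lambda>_. 0)}"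
  proof
    show "f ` vecs M1 \<subseteq> {w \<in> vecs M2. g w = (\<lambda>_. 0)}"
    proof
      fix w assume "w \<in> f ` vecs M1"
      then obtain v where v: "v \<in> vecs M1" "w = f v" by blast
      have wv: "w \<in> vecs M2" using comod_vecs[OF cf v(1)] v(2) by simp
      have "g w = (\<lambda>_. 0)"
      proof
        fix c
        show "g w c = 0"
        proof (cases "w c = 0")
          case False
          have "c \<in> fmap p j ` basis M1" using False v(2) by (simp add: f_def push_def split: if_splits)
          then obtain b where b: "b \<in> LB p j \<times> LB p i" "c = fmap p j b" using B1 by blast
          have b': "b \<in> basis (ell p j) \<times> basis (ell p i)" using b by (simp add: basis_ell_LB)
          have "c \<notin> QB p j" using M1(2)[OF p i b'] b(2) by (simp add: QB_def)
          then show ?thesis using B3 by (simp add: g_def pull_def)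
        qed (simp add: g_def pull_def)
      qed
      then show "w \<in> {w \<in> vecs M2. g w = (\<lambda>_. 0)}" using wv by simp
    qed
    show "{w \<in> vecs M2. g w = (\<lambda>_. 0)} \<subseteq> f ` vecs M1"
    proof
      fix w assume w: "w \<in> {w \<in> vecs M2. g w = (\<lambda>_. 0)}"
      then have wv: "w \<in> vecs M2" and gw: "g w = (\<lambda>_. 0)" by auto
      note W = vecsD[OF wv]
      have wf: "w c = 0" if "c \<notin> fmap p j ` basis M1" for c
      proof (rule ccontr)
        assume nz: "w c \<noteq> 0"
        have cl: "c \<in> basis (ell p (p * j + i))" using W(2) nz B2 by (auto simp: basis_ell_LB)
        have "c \<notin> QB p j"
        proof
          assume "c \<in> QB p j"
          then have "g w c = w c" using B3 by (simp add: g_def pull_def)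
          then show False using gw nz by simp
        qed
        then have "\<not> wt p (fst c - {2}, snd c) < p * (p * j)" using cl by (simp add: QB_def basis_ell_LB LB_def)
        from M2[OF p i cl this] obtain b where "b \<in> basis (ell p j) \<times> basis (ell p i)" "c = fmap p j b" by blast
        then show False using that B1 by (simp add: basis_ell_LB)
      qed
      define v where "v = (\<lambda>b. if b \<in> basis M1 then w (fmap p j b) else 0)"
      have injB: "inj_on (fmap p j) (basis M1)" using fmap_inj[OF p i] B1 by simp
      have sv: "{b. v b \<noteq> 0} \<subseteq> basis M1" by (auto simp: v_def)
      have "fmap p j ` {b. v b \<noteq> 0} \<subseteq> {c. w c \<noteq> 0}" by (auto simp: v_def split: if_splits)
      then have "finite (fmap p j ` {b. v b \<noteq> 0})" using W(1) finite_subset by blast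
      then have fv: "finite {b. v b \<noteq> 0}" using finite_imageD inj_on_subset[OF injB sv] by blast
      have vv: "v \<in> vecs M1" using sv fv by (auto simp: vecs_def)
      have "f v = w"
      proof
        fix c show "f v c = w c"
        proof (cases "c \<in> fmap p j ` basis M1")
          case True
          then obtain b where b: "b \<in> basis M1" "c = fmap p j b" by blast
          have "f v c = v b" using push_at[OF injB b(1), of v] b(2) by (simp add: f_def)
          then show ?thesis using b by (simp add: v_def)
        next
          case False then show ?thesis using wf by (simp add: f_def push_def)
        qed
      qed
      then show "w \<in> f ` vecs M1" using vv by blast
    qed
  qed
  have hg: "g ` vecs M2 = {w \<in> vecs M3. h w = (\<lambda>_. 0)}"
  proof
    show "g ` vecs M2 \<subseteq> {w \<in> vecs M3. h w = (\<lambda>_. 0)}"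
    proof
      fix w assume "w \<in> g ` vecs M2"
      then obtain v where v: "v \<in> vecs M2" "w = g v" by blast
      have wv: "w \<in> vecs M3" using comod_vecs[OF cg v(1)] v(2) by simp
      have "h w = (\<lambda>_. 0)"
      proof
        fix d show "h w d = 0"
        proof (cases "d \<in> basis M4")
          case True
          have d': "d \<in> {i + 1..p - 1} \<times> basis (ell p (j - 1))" using True B4 by (simp add: DB_def basis_ell_LB)
          have "psimap p j d \<notin> basis M2" using M3(3)[OF p j d'] B2 by (simp add: LB_def)
          then have "v (psimap p j d) = 0" using vecsD(3)[OF v(1)] by simp
          then show ?thesis using v(2) True by (simp add: h_def g_def pull_def)
        qed (simp add: h_def pull_def)
      qed
      then show "w \<in> {w \<in> vecs M3. h w = (\<lambda>_. 0)}" using wv by simp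
    qed
    show "{w \<in> vecs M3. h w = (\<lambda>_. 0)} \<subseteq> g ` vecs M2"
    proof
      fix w assume w: "w \<in> {w \<in> vecs M3. h w = (\<lambda>_. 0)}"
      then have wv: "w \<in> vecs M3" and hw: "h w = (\<lambda>_. 0)" by auto
      note W = vecsD[OF wv]
      have sub: "w c = 0" if "c \<notin> basis M2" for c
      proof (rule ccontr)
        assume nz: "w c \<noteq> 0"
        have cq: "c \<in> QB p j" using W(2) nz B3 by auto
        have cA: "c \<in> A_basis" and cw: "wt p (fst c - {2}, snd c) < p * (p * j)" using cq by (auto simp: QB_def)
        have "\<not> wt p c \<le> p * (p * j + i)" using that cA B2 by (simp add: LB_def)
        from M4[OF p j i cA cw this] obtain d where d: "d \<in> {i + 1..p - 1} \<times> basis (ell p (j - 1))" "c = psimap p j d"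
          by blast
        have dB: "d \<in> basis M4" using d(1) B4 by (simp add: DB_def basis_ell_LB)
        have "h w d = sig d * w c" using dB d(2) by (simp add: h_def pull_def)
        moreover have "sig d * w c \<noteq> (0::'k)" using nz by (simp add: sig_def)
        ultimately show False using hw by simp
      qed
      have wv2: "w \<in> vecs M2" using W(1) sub by (auto simp: vecs_def)
      have "g w = w"
      proof
        fix c show "g w c = w c" using W(3) by (simp add: g_def pull_def)
      qed
      then show "w \<in> g ` vecs M2" using wv2 by (metis image_eqI)
    qed
  qed
  have sh: "h ` vecs M3 = vecs M4"
  proof
    show "h ` vecs M3 \<subseteq> vecs M4" using comod_vecs[OF ch] by blast
    show "vecs M4 \<subseteq> h ` vecs M3"
    proof
      fix u assume u: "u \<in> vecs M4"
      note U = vecsD[OF u]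
      have injD: "inj_on (psimap p j) (basis M4)" using psimap_inj[OF j] B4 by simp
      define w where "w = push (psimap p j) (basis M4) (\<lambda>d. sig d * u d)"
      have sw: "{c. w c \<noteq> 0} = psimap p j ` {d. sig d * u d \<noteq> 0}"
        unfolding w_def by (rule push_supp[OF injD]) (use U(2) in auto)
      have sw2: "{d. sig d * u d \<noteq> (0::'k)} = {d. u d \<noteq> 0}" by (auto simp: sig_def)
      have img: "psimap p j ` basis M4 \<subseteq> basis M3"
      proof
        fix c assume "c \<in> psimap p j ` basis M4"
        then obtain d where d: "d \<in> basis M4" "c = psimap p j d" by blast
        have d': "d \<in> {i + 1..p - 1} \<times> basis (ell p (j - 1))" using d B4 by (simp add: DB_def basis_ell_LB)
        show "c \<in> basis M3" using M3(1,2)[OF p j d'] d B3 by (simp add: QB_def)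
      qed
      have fw: "finite {c. w c \<noteq> 0}" using sw sw2 U(1) by simp
      have bw: "\<forall>c. w c \<noteq> 0 \<longrightarrow> c \<in> basis M3"
      proof (intro allI impI)
        fix c assume "w c \<noteq> 0"
        then have "c \<in> psimap p j ` {d. u d \<noteq> 0}" using sw sw2 by blast
        then have "c \<in> psimap p j ` basis M4" using U(2) by blast
        then show "c \<in> basis M3" using img by blast
      qed
      have wv: "w \<in> vecs M3"
        unfolding vecs_def mem_Collect_eq using fw bw by blast
      have "h w = u"
      proof
        fix d show "h w d = u d"
        proof (cases "d \<in> basis M4")
          case True
          have "w (psimap p j d) = sig d * u d" using push_at[OF injD True] by (simp add: w_def)
          moreover have "sig d * sig d = (1::'k)" unfolding sig_def by (simp flip: power_mult_distrib)
          ultimately show ?thesis using True by (simp add: h_def pull_def mult.assoc[symmetric])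
        next
          case False then show ?thesis using U(3) by (simp add: h_def pull_def)
        qed
      qed
      then show "u \<in> h ` vecs M3" using wv by blast
    qed
  qed
  have exM: "exact4 M1 M2 M3 M4 f g h"
    unfolding exact4_def by (intro conjI cf cg ch injf gf hg sh)
  have ex: "exact4
           (susp (qq p * int p * int j) (tensor p (ell p j :: (amon, 'k) bcomod) (ell p i)))
           (ell p (p * j + i))
           (Qquot p (p * j - 1))
           (dsum_susp {i + 1..p - 1} (phi p j) (ell p (j - 1) :: (amon, 'k) bcomod))
           f g h" using exM unfolding M1_def M2_def M3_def M4_def .
  show ?thesis by (rule exI[where x=f], rule exI[where x=g], rule exI[where x=h], rule ex)
qed


end
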